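(* Let $M \geq 3$, $T \geq 16$, and $0 < \varepsilon \leq \min\{\frac{1}{M}, \frac{1}{100}\}$. Let the tuning parameters of the $M$-stage adaptive Neyman allocation algorithm be $\beta_m = 6 \cdot 15^{-\frac{m}{M}}$ (and $\beta_M = 1$). Under these parameters the algorithm is feasible, i.e., $1 < \beta_1 T^{\frac{1}{M}} < \dots < \beta_{M-1} T^{\frac{M-1}{M}} < T$. Furthermore, let $(T(1), T(0))$ be the total numbers of treated and control subjects produced by the algorithm. If there exist constants $\kappa(1), \kappa(0) < \infty$ not depending on $T$ with $\kappa(w) = \mathrm{E}[(Y(w) - \mathrm{E}Y(w))^4]/\sigma^4(w)$ for $w \in \{0,1\}$, then there exists an event that happens with probability at least $1 - (M-1)(\kappa(1) + \kappa(0)) T^{-\varepsilon}$, conditional on which \begin{align*} \sup_{\sigma(1), \sigma(0)} \ \frac{V(T(1), T(0))}{V(T^*(1), T^*(0))} \leq 1 + 4 \cdot 15^{-\frac{1}{M}} T^{-\frac{M-1}{M} + \varepsilon}. \end{align*}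
   Context: There are $T$ subjects; each subject $t$ has potential outcomes $(Y_t(1), Y_t(0))$ drawn i.i.d. from a super-population distribution of $(Y(1), Y(0))$, with standard deviations $\sigma(1), \sigma(0) > 0$. For allocations with $T(1)$ treated and $T(0)$ control subjects ($T(1)+T(0)=T$), the proxy mean squared error is $V(T(1), T(0)) = \frac{\sigma^2(1)}{T(1)} + \frac{\sigma^2(0)}{T(0)}$. The Neyman (clairvoyant) allocation is $T^*(1) = \frac{\sigma(1)}{\sigma(1)+\sigma(0)}T$, $T^*(0) = \frac{\sigma(0)}{\sigma(1)+\sigma(0)}T$, with $V(T^*(1), T^*(0)) = \frac{1}{T}(\sigma(1)+\sigma(0))^2$. The $M$-stage adaptive Neyman allocation algorithm: stage $m$ ends once a cumulative total of $\beta_m T^{m/M}$ subjects has been enrolled ($\beta_M = 1$); each stage is a completely randomized experiment with prescribed numbers of treated/control subjects. Stage 1 assigns $\frac{\beta_1}{2}T^{1/M}$ subjects to each arm. After stage $m$ ($m \le M-1$), compute the sample variances $\widehat{\sigma}^2_m(1), \widehat{\sigma}^2_m(0)$ (unbiased, $1/(n-1)$ normalization) from all treated, resp. control, observations in stages $1,\dots,m$, and set $\widehat{p}_w = \frac{\widehat{\sigma}_m(w)}{\widehat{\sigma}_m(1)+\widehat{\sigma}_m(0)}T$. For $m \le M-2$: (i) if $\widehat{p}_0 < \frac{\beta_m}{2}T^{m/M}$, all remaining subjects are assigned to treatment; (ii) if $\frac{\beta_m}{2}T^{m/M} \le \widehat{p}_0 < \frac{\beta_{m+1}}{2}T^{(m+1)/M}$,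 stage $m+1$ assigns $\widehat{p}_0 - \frac{\beta_m}{2}T^{m/M}$ subjects to control and $\beta_{m+1}T^{(m+1)/M} - \widehat{p}_0 - \frac{\beta_m}{2}T^{m/M}$ to treatment, and all later subjects go to treatment; (iii) if both $\widehat{p}_0, \widehat{p}_1 \ge \frac{\beta_{m+1}}{2}T^{(m+1)/M}$, stage $m+1$ assigns $\frac{\beta_{m+1}}{2}T^{(m+1)/M} - \frac{\beta_m}{2}T^{m/M}$ to each arm and the procedure continues; (iv),(v) are the symmetric versions of (ii),(i) with the roles of treatment and control swapped. After stage $M-1$: if $\widehat{p}_0 < \frac{\beta_{M-1}}{2}T^{(M-1)/M}$, all of stage $M$ goes to treatment; if $\widehat{p}_1 < \frac{\beta_{M-1}}{2}T^{(M-1)/M}$, all of stage $M$ goes to control; otherwise stage $M$ assigns $\widehat{p}_w - \frac{\beta_{M-1}}{2}T^{(M-1)/M}$ subjects to arm $w$. *)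

theory Defs
  imports "HOL-Probability.Probability"
begin

definition pop_mean :: "'a measure \<Rightarrow> ('a \<Rightarrow> real) \<Rightarrow> real" where
  "pop_mean P X = integral\<^sup>L P X"

definition pop_var :: "'a measure \<Rightarrow> ('a \<Rightarrow> real) \<Rightarrow> real" where
  "pop_var P X = integral\<^sup>L P (\<lambda>x. (X x - pop_mean P X) ^ 2)"

definition pop_sd :: "'a measure \<Rightarrow> ('a \<Rightarrow> real) \<Rightarrow> real" where
  "pop_sd P X = sqrt (pop_var P X)"

definition kurt :: "'a measure \<Rightarrow> ('a \<Rightarrow> real) \<Rightarrow> real" where
  "kurt P X = integral\<^sup>L P (\<lambda>x. (X x - pop_mean P X) ^ 4) / (pop_sd P X) ^ 4"

definition proxyV :: "real \<Rightarrow> real \<Rightarrow> real \<Rightarrow> real \<Rightarrow> real" where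
  "proxyV s1 s0 t1 t0 = s1 ^ 2 / t1 + s0 ^ 2 / t0"

definition neymanV :: "real \<Rightarrow> real \<Rightarrow> real \<Rightarrow> real" where
  "neymanV s1 s0 T = (s1 + s0) ^ 2 / T"

definition sample_var :: "(nat \<Rightarrow> real) \<Rightarrow> nat \<Rightarrow> real" where
  "sample_var x n =
     (let mu = (\<Sum>i<n. x i) / real n in (\<Sum>i<n. (x i - mu) ^ 2) / (real n - 1))"

definition sample_sd :: "(nat \<Rightarrow> real) \<Rightarrow> nat \<Rightarrow> real" where
  "sample_sd x n = sqrt (sample_var x n)"

definition beta :: "nat \<Rightarrow> nat \<Rightarrow> real" where
  "beta M m = (if m = M then 1 else 6 * 15 powr (- (real m / real M)))"

text \<open>Cumulative number of subjects enrolled at the end of stage m: beta_m T^(m/M).\<close>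
definition stage_end :: "nat \<Rightarrow> nat \<Rightarrow> nat \<Rightarrow> real" where
  "stage_end M T m = beta M m * real T powr (real m / real M)"

text \<open>Number of subjects per arm after stage m when all stages 1..m were balanced:
  beta_m/2 T^(m/M).\<close>
definition half_end :: "nat \<Rightarrow> nat \<Rightarrow> nat \<Rightarrow> real" where
  "half_end M T m = stage_end M T m / 2"

text \<open>Number of observations available in an arm that holds (real-valued) count c:
  the observations with indices i such that i < c, i.e. ceiling c of them.\<close>
definition n_obs :: "real \<Rightarrow> nat" where
  "n_obs c = card {i::nat. real i < c}"

text \<open>
  alg M T Y1 Y0 m: the final totals (T(1), T(0)) of treated and control subjects,
  given that stages 1..m were balanced (so each arm holds half_end M T m subjects)
  and the decision after stage m is about to be taken.  Y1 i (resp. Y0 i) is the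
  outcome of the i-th treated (resp. control) subject in order of enrolment.
\<close>
function alg :: "nat \<Rightarrow> nat \<Rightarrow> (nat \<Rightarrow> real) \<Rightarrow> (nat \<Rightarrow> real) \<Rightarrow> nat \<Rightarrow> real \<times> real" where
  "alg M T Y1 Y0 m =
    (let a = half_end M T m;
         N = n_obs a;
         s1 = sample_sd Y1 N;
         s0 = sample_sd Y0 N;
         p1 = s1 / (s1 + s0) * real T;
         p0 = s0 / (s1 + s0) * real T
     in if M \<le> m + 1 then
          (if p0 < a then (real T - a, a)
           else if p1 < a then (a, real T - a)
           else (a + (p1 - a), a + (p0 - a)))
        else
          (let b = half_end M T (m + 1) in
           if p0 < a then (real T - a, a)
           else if p0 < b then (real T - p0, p0)
           else if p1 < a then (a, real T - a)
           else if p1 < b then (p1, real T - p1)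
           else alg M T Y1 Y0 (m + 1)))"
  by pat_completeness auto
termination
  by (relation "Wellfounded.measure (\<lambda>(M, T, Y1, Y0, m). M - m)") auto

definition adaptive_alloc :: "nat \<Rightarrow> nat \<Rightarrow> (nat \<Rightarrow> real) \<Rightarrow> (nat \<Rightarrow> real) \<Rightarrow> real \<times> real" where
  "adaptive_alloc M T Y1 Y0 = alg M T Y1 Y0 1"

end

theory Submission
  imports Defs
begin

definition Sf :: "nat \<Rightarrow> (nat \<Rightarrow> real) \<Rightarrow> real" where
  "Sf n f = (\<Sum>i<n. f i)"
definition Uf :: "real \<Rightarrow> nat \<Rightarrow> (nat \<Rightarrow> real) \<Rightarrow> real" where
  "Uf s n f = (\<Sum>i<n. f i ^ 2 - s)"
definition Vf :: "nat \<Rightarrow> (nat \<Rightarrow> real) \<Rightarrow> real" where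
  "Vf n f = (\<Sum>j<n. f j * Sf j f)"

lemma Sf_dep: "(\<And>i. i < n \<Longrightarrow> f i = g i) \<Longrightarrow> Sf n f = Sf n g"
  unfolding Sf_def by (rule sum.cong) auto
lemma Uf_dep: "(\<And>i. i < n \<Longrightarrow> f i = g i) \<Longrightarrow> Uf s n f = Uf s n g"
  unfolding Uf_def by (rule sum.cong) auto
lemma Vf_dep: "(\<And>i. i < n \<Longrightarrow> f i = g i) \<Longrightarrow> Vf n f = Vf n g"
  unfolding Vf_def by (rule sum.cong) (auto intro!: Sf_dep)

lemma SVf_dep: "(\<And>i. i < n \<Longrightarrow> f i = g i) \<Longrightarrow> Sf n f * Vf n f = Sf n g * Vf n g"
  using Sf_dep[of n f g] Vf_dep[of n f g] by simp
lemma USf_dep: "(\<And>i. i < n \<Longrightarrow> f i = g i) \<Longrightarrow> Uf s n f * Sf n f = Uf s n g * Sf n g"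
  using Sf_dep[of n f g] Uf_dep[of n f g s] by simp
lemma Sf2_dep: "(\<And>i. i < n \<Longrightarrow> f i = g i) \<Longrightarrow> (Sf n f)^2 = (Sf n g)^2"
  using Sf_dep[of n f g] by simp

lemma Sf_Suc: "Sf (Suc n) f = Sf n f + f n" by (simp add: Sf_def)
lemma Uf_Suc: "Uf s (Suc n) f = Uf s n f + (f n ^ 2 - s)" by (simp add: Uf_def)
lemma Vf_Suc: "Vf (Suc n) f = Vf n f + f n * Sf n f" by (simp add: Vf_def)

lemma Sf_meas[measurable]: "Sf n \<in> borel_measurable (PiM UNIV (\<lambda>_. borel))"
  unfolding Sf_def by measurable
lemma Uf_meas[measurable]: "Uf s n \<in> borel_measurable (PiM UNIV (\<lambda>_. borel))"
  unfolding Uf_def by measurable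
lemma Vf_meas[measurable]: "Vf n \<in> borel_measurable (PiM UNIV (\<lambda>_. borel))"
  unfolding Vf_def Sf_def by measurable

lemma sq_sum_expand: "(Sf n f)^2 = (\<Sum>i<n. f i ^ 2) + 2 * Vf n f"
  by (induction n) (simp_all add: Sf_def Vf_def power2_eq_square algebra_simps)

lemma sum_sq_dev: "(\<Sum>i<n. (z i - m)^2) = (\<Sum>i<n. z i ^ 2) - 2 * m * (\<Sum>i<n. z i) + real n * m^2"
  by (induction n) (simp_all add: power2_eq_square algebra_simps)

lemma sample_var_expand:
  assumes "3 \<le> n"
  shows "sample_var x n - s = Uf s n (\<lambda>i. x i - c) / n - 2 * Vf n (\<lambda>i. x i - c) / (real n * (real n - 1))"
proof -
  define z where "z = (\<lambda>i. x i - c)"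
  have nz: "real n \<noteq> 0" "real n - 1 \<noteq> 0" using assms by auto
  have mu: "(\<Sum>i<n. x i) / real n = Sf n z / n + c"
    using nz by (simp add: z_def Sf_def sum_subtractf field_simps)
  have "(\<Sum>i<n. (x i - (Sf n z / n + c))^2) = (\<Sum>i<n. (z i - Sf n z / n)^2)"
    by (simp add: z_def algebra_simps)
  also have "\<dots> = (\<Sum>i<n. z i ^ 2) - 2 * (Sf n z / n) * Sf n z + n * (Sf n z / n)^2"
    unfolding Sf_def by (rule sum_sq_dev)
  also have "\<dots> = (\<Sum>i<n. z i ^ 2) - (Sf n z)^2 / n"
    using nz by (simp add: field_simps power2_eq_square)
  also have "\<dots> = (\<Sum>i<n. z i ^ 2) * (1 - 1/n) - 2 * Vf n z / n"
    unfolding sq_sum_expand using nz by (simp add: field_simps)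
  finally have eq: "(\<Sum>i<n. (x i - (Sf n z / n + c))^2) = (\<Sum>i<n. z i ^ 2) * (1 - 1/n) - 2 * Vf n z / n" .
  have U: "Uf s n z = (\<Sum>i<n. z i ^ 2) - n * s"
    by (simp add: Uf_def sum_subtractf)
  show ?thesis
    unfolding sample_var_def Let_def mu eq z_def[symmetric] U
    using nz by (simp add: field_simps)
qed



lemma abs_mult_le_sq: "\<bar>a*b\<bar> \<le> a^2 + (b::real)^2"
proof -
  have "0 \<le> (\<bar>a\<bar> - \<bar>b\<bar>)^2" by simp
  then have "2*(\<bar>a\<bar>*\<bar>b\<bar>) \<le> \<bar>a\<bar>^2 + \<bar>b\<bar>^2" by (simp add: power2_diff)
  moreover have "0 \<le> \<bar>a\<bar>*\<bar>b\<bar>" by simp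
  moreover have "\<bar>a\<bar>^2 = a^2" "\<bar>b\<bar>^2 = b^2" by simp_all
  ultimately have "\<bar>a\<bar>*\<bar>b\<bar> \<le> a^2 + b^2" by linarith
  then show ?thesis by (simp add: abs_mult)
qed

lemma sq_add_le: "(a + b)^2 \<le> 2*a^2 + 2*(b::real)^2"
proof -
  have "0 \<le> (a - b)^2" by simp
  then show ?thesis by (simp add: power2_eq_square algebra_simps)
qed

lemma four_add_le: "(a + b)^4 \<le> 8*a^4 + 8*(b::real)^4"
proof -
  have "(a+b)^4 = ((a+b)^2)^2" by simp
  also have "\<dots> \<le> (2*a^2 + 2*b^2)^2" using sq_add_le[of a b]
    by (intro power_mono) auto
  also have "\<dots> \<le> 2*(2*a^2)^2 + 2*(2*b^2)^2" by (rule sq_add_le)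
  finally show ?thesis by simp
qed

definition L2 :: "'a measure \<Rightarrow> ('a \<Rightarrow> real) \<Rightarrow> bool" where
  "L2 M f \<longleftrightarrow> f \<in> borel_measurable M \<and> integrable M (\<lambda>x. f x ^ 2)"
definition L4 :: "'a measure \<Rightarrow> ('a \<Rightarrow> real) \<Rightarrow> bool" where
  "L4 M f \<longleftrightarrow> f \<in> borel_measurable M \<and> integrable M (\<lambda>x. f x ^ 4)"

context prob_space begin

lemma L2_mult_int:
  assumes "L2 M f" "L2 M g" shows "integrable M (\<lambda>x. f x * g x)"
proof -
  have [measurable]: "f \<in> borel_measurable M" "g \<in> borel_measurable M" using assms by (auto simp: L2_def)
  show ?thesis
    by (rule Bochner_Integration.integrable_bound[where f="\<lambda>x. f x^2 + g x^2"])
       (use assms in \<open>auto simp: L2_def abs_mult_le_sq\<close>)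
qed


lemma L2_const: "L2 M (\<lambda>x. c)"
  by (simp add: L2_def)

lemma L2_int: assumes "L2 M f" shows "integrable M f"
  using L2_mult_int[OF assms L2_const[of 1]] by simp

lemma L2_add: assumes "L2 M f" "L2 M g" shows "L2 M (\<lambda>x. f x + g x)"
proof -
  have [measurable]: "f \<in> borel_measurable M" "g \<in> borel_measurable M" using assms by (auto simp: L2_def)
  have "integrable M (\<lambda>x. (f x + g x)^2)"
    by (rule Bochner_Integration.integrable_bound[where f="\<lambda>x. 2*f x^2 + 2*g x^2"])
       (use assms sq_add_le in \<open>auto simp: L2_def\<close>)
  then show ?thesis by (simp add: L2_def)
qed

lemma L2_cmult: assumes "L2 M f" shows "L2 M (\<lambda>x. c * f x)"
proof -
  have [measurable]: "f \<in> borel_measurable M" using assms by (auto simp: L2_def)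
  show ?thesis using assms by (simp add: L2_def power_mult_distrib)
qed

lemma L2_diff: assumes "L2 M f" "L2 M g" shows "L2 M (\<lambda>x. f x - g x)"
  using L2_add[OF assms(1) L2_cmult[OF assms(2), of "-1"]] by simp

lemma L2_sum: assumes "\<And>i. i < n \<Longrightarrow> L2 M (f i)" shows "L2 M (\<lambda>x. \<Sum>i<(n::nat). f i x)"
  using assms
proof (induction n)
  case 0 then show ?case by (simp add: L2_const)
next
  case (Suc n) then show ?case by (simp add: L2_add)
qed

lemma L4_add: assumes "L4 M f" "L4 M g" shows "L4 M (\<lambda>x. f x + g x)"
proof -
  have [measurable]: "f \<in> borel_measurable M" "g \<in> borel_measurable M" using assms by (auto simp: L4_def)
  have "integrable M (\<lambda>x. (f x + g x)^4)"
    by (rule Bochner_Integration.integrable_bound[where f="\<lambda>x. 8*f x^4 + 8*g x^4"])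
       (use assms four_add_le in \<open>auto simp: L4_def\<close>)
  then show ?thesis by (simp add: L4_def)
qed

lemma L4_const: "L4 M (\<lambda>x. c)"
  by (simp add: L4_def)

lemma L4_sum: assumes "\<And>i. i < n \<Longrightarrow> L4 M (f i)" shows "L4 M (\<lambda>x. \<Sum>i<(n::nat). f i x)"
  using assms
proof (induction n)
  case 0 then show ?case by (simp add: L4_const)
next
  case (Suc n) then show ?case by (simp add: L4_add)
qed

lemma L4_mult: assumes "L4 M f" "L4 M g" shows "L2 M (\<lambda>x. f x * g x)"
proof -
  have [measurable]: "f \<in> borel_measurable M" "g \<in> borel_measurable M" using assms by (auto simp: L4_def)
  have "integrable M (\<lambda>x. (f x * g x)^2)"
  proof (rule Bochner_Integration.integrable_bound[where f="\<lambda>x. f x^4 + g x^4"])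
    show "integrable M (\<lambda>x. f x^4 + g x^4)" using assms by (auto simp: L4_def)
    show "AE x in M. norm ((f x * g x)^2) \<le> norm (f x^4 + g x^4)"
    proof (intro AE_I2)
      fix x
      have "\<bar>f x ^2 * g x ^2\<bar> \<le> (f x^2)^2 + (g x^2)^2" by (rule abs_mult_le_sq)
      then show "norm ((f x * g x)^2) \<le> norm (f x^4 + g x^4)"
        by (simp add: power_mult_distrib flip: power_mult)
    qed
  qed auto
  then show ?thesis by (simp add: L2_def)
qed

lemma L4_L2: assumes "L4 M f" shows "L2 M f"
  using L4_mult[OF assms L4_const[of 1]] by simp

lemma lone:
  fixes Z :: "nat \<Rightarrow> 'a \<Rightarrow> real" and h :: "real \<Rightarrow> real" and F :: "(nat \<Rightarrow> real) \<Rightarrow> real"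
  assumes ind: "indep_vars (\<lambda>_. borel) Z UNIV"
    and h[measurable]: "h \<in> borel_measurable borel"
    and F[measurable]: "F \<in> borel_measurable (PiM UNIV (\<lambda>_. borel))"
    and dep: "\<And>f g. (\<And>i. i < n \<Longrightarrow> f i = g i) \<Longrightarrow> F f = F g"
    and ih: "integrable M (\<lambda>\<omega>. h (Z n \<omega>))"
    and iF: "integrable M (\<lambda>\<omega>. F (\<lambda>i. Z i \<omega>))"
  shows "integral\<^sup>L M (\<lambda>\<omega>. h (Z n \<omega>) * F (\<lambda>i. Z i \<omega>)) = integral\<^sup>L M (\<lambda>\<omega>. h (Z n \<omega>)) * integral\<^sup>L M (\<lambda>\<omega>. F (\<lambda>i. Z i \<omega>))"
    and "integrable M (\<lambda>\<omega>. h (Z n \<omega>) * F (\<lambda>i. Z i \<omega>))"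
proof -
  define ext where "ext = (\<lambda>(f::nat\<Rightarrow>real) i. if i < n then f i else 0)"
  have ext_m: "ext \<in> PiM {..<n} (\<lambda>_. borel) \<rightarrow>\<^sub>M PiM UNIV (\<lambda>_. borel)"
    unfolding ext_def
  proof (rule measurable_PiM_single')
    fix i :: nat
    show "(\<lambda>\<omega>. if i < n then \<omega> i else 0) \<in> borel_measurable (Pi\<^sub>M {..<n} (\<lambda>_. borel))"
      by (cases "i < n") auto
  qed auto
  have I: "indep_var (PiM {n} (\<lambda>_. borel)) (\<lambda>\<omega>. restrict (\<lambda>i. Z i \<omega>) {n})
       (PiM {..<n} (\<lambda>_. borel)) (\<lambda>\<omega>. restrict (\<lambda>i. Z i \<omega>) {..<n})"
    by (rule indep_var_restrict[OF ind]) auto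
  have m1: "(\<lambda>f. h (f n)) \<in> borel_measurable (PiM {n} (\<lambda>_. borel))" by measurable
  have m2: "(\<lambda>f. F (ext f)) \<in> borel_measurable (PiM {..<n} (\<lambda>_. borel))"
    using ext_m by measurable
  have I2: "indep_var borel ((\<lambda>f. h (f n)) \<circ> (\<lambda>\<omega>. restrict (\<lambda>i. Z i \<omega>) {n}))
       borel ((\<lambda>f. F (ext f)) \<circ> (\<lambda>\<omega>. restrict (\<lambda>i. Z i \<omega>) {..<n}))"
    by (rule indep_var_compose[OF I m1 m2])
  have e1: "((\<lambda>f. h (f n)) \<circ> (\<lambda>\<omega>. restrict (\<lambda>i. Z i \<omega>) {n})) = (\<lambda>\<omega>. h (Z n \<omega>))"
    by (auto simp: fun_eq_iff)
  have e2: "((\<lambda>f. F (ext f)) \<circ> (\<lambda>\<omega>. restrict (\<lambda>i. Z i \<omega>) {..<n})) = (\<lambda>\<omega>. F (\<lambda>i. Z i \<omega>))"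
    by (auto simp: fun_eq_iff ext_def intro!: dep)
  have I3: "indep_var borel (\<lambda>\<omega>. h (Z n \<omega>)) borel (\<lambda>\<omega>. F (\<lambda>i. Z i \<omega>))"
    using I2 unfolding e1 e2 .
  show "integral\<^sup>L M (\<lambda>\<omega>. h (Z n \<omega>) * F (\<lambda>i. Z i \<omega>)) = integral\<^sup>L M (\<lambda>\<omega>. h (Z n \<omega>)) * integral\<^sup>L M (\<lambda>\<omega>. F (\<lambda>i. Z i \<omega>))"
    "integrable M (\<lambda>\<omega>. h (Z n \<omega>) * F (\<lambda>i. Z i \<omega>))"
    using indep_var_lebesgue_integral[OF I3 ih iF] indep_var_integrable[OF I3 ih iF] by auto
qed

end


context prob_space begin

lemma int_lin3: "integrable M f \<Longrightarrow> integrable M g \<Longrightarrow> integrable M h \<Longrightarrow>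
   integral\<^sup>L M (\<lambda>x. f x + c * g x + (h x::real)) = integral\<^sup>L M f + c * integral\<^sup>L M g + integral\<^sup>L M h"
  by simp

lemma moments:
  fixes X :: "nat \<Rightarrow> 'a \<Rightarrow> real"
  assumes ind: "indep_vars (\<lambda>_. borel) X UNIV"
    and idd: "\<And>i. distr M borel (X i) = distr M borel (X 0)"
    and i4: "integrable M (\<lambda>x. X 0 x ^ 4)" and N: "3 \<le> N"
  shows "integrable M (\<lambda>\<omega>. (sample_var (\<lambda>i. X i \<omega>) N - pop_var M (X 0))^2)"
    and "expectation (\<lambda>\<omega>. (sample_var (\<lambda>i. X i \<omega>) N - pop_var M (X 0))^2)
         \<le> expectation (\<lambda>x. (X 0 x - pop_mean M (X 0))^4) / N"
proof -
  define \<mu> where "\<mu> = pop_mean M (X 0)"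
  define \<sigma>2 where "\<sigma>2 = pop_var M (X 0)"
  define \<mu>4 where "\<mu>4 = expectation (\<lambda>x. (X 0 x - \<mu>)^4)"
  have Xm[measurable]: "\<And>i. X i \<in> borel_measurable M"
    using ind by (auto simp: indep_vars_def)
  have tr: "integral\<^sup>L M (\<lambda>\<omega>. k (X i \<omega>)) = integral\<^sup>L M (\<lambda>\<omega>. k (X 0 \<omega>))
      \<and> (integrable M (\<lambda>\<omega>. k (X i \<omega>)) \<longleftrightarrow> integrable M (\<lambda>\<omega>. k (X 0 \<omega>)))"
    if k[measurable]: "k \<in> borel_measurable borel" for k :: "real \<Rightarrow> real" and i
    using integral_distr[OF Xm[of i] k] integral_distr[OF Xm[of 0] k]
      integrable_distr_eq[OF Xm[of i] k] integrable_distr_eq[OF Xm[of 0] k] idd[of i]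
    by simp
  define Z where "Z = (\<lambda>i \<omega>. X i \<omega> - \<mu>)"
  have Zm[measurable]: "\<And>i. Z i \<in> borel_measurable M" unfolding Z_def by measurable
  have indZ: "indep_vars (\<lambda>_. borel) Z UNIV"
    unfolding Z_def by (rule indep_vars_compose2[OF ind]) auto
  have L4X0: "L4 M (X 0)" using i4 by (simp add: L4_def)
  have X0int: "integrable M (X 0)" using L2_int[OF L4_L2[OF L4X0]] .
  have L4Z0: "L4 M (Z 0)" unfolding Z_def
    using L4_add[OF L4X0 L4_const[of "-\<mu>"]] by simp
  have L4Z: "L4 M (Z i)" for i
  proof -
    have "integrable M (\<lambda>\<omega>. (\<lambda>x. (x - \<mu>)^4) (X i \<omega>))"
      using tr[of "\<lambda>x. (x - \<mu>)^4" i] L4Z0 by (simp add: L4_def Z_def)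
    then show ?thesis by (simp add: L4_def Z_def)
  qed
  have L2Z: "L2 M (Z i)" for i using L4_L2[OF L4Z] .
  have intZ: "integrable M (Z i)" for i using L2_int[OF L2Z] .
  have intZ2: "integrable M (\<lambda>\<omega>. Z i \<omega>^2)" for i using L2Z by (simp add: L2_def)
  have intZ4: "integrable M (\<lambda>\<omega>. Z i \<omega>^4)" for i using L4Z by (simp add: L4_def)
  have EZ: "expectation (Z i) = 0" for i
  proof -
    have "expectation (Z i) = expectation (\<lambda>\<omega>. (\<lambda>x. x - \<mu>) (X i \<omega>))" by (simp add: Z_def)
    also have "\<dots> = expectation (\<lambda>\<omega>. X 0 \<omega> - \<mu>)" using tr[of "\<lambda>x. x - \<mu>" i] by simp
    also have "\<dots> = 0" using X0int by (simp add: \<mu>_def pop_mean_def prob_space)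
    finally show ?thesis .
  qed
  have EZ2: "expectation (\<lambda>\<omega>. Z i \<omega>^2) = \<sigma>2" for i
    using tr[of "\<lambda>x. (x - \<mu>)^2" i] by (simp add: Z_def \<sigma>2_def pop_var_def \<mu>_def)
  have EZ4: "expectation (\<lambda>\<omega>. Z i \<omega>^4) = \<mu>4" for i
    using tr[of "\<lambda>x. (x - \<mu>)^4" i] by (simp add: Z_def \<mu>4_def)
  define W where "W = (\<lambda>i \<omega>. Z i \<omega>^2 - \<sigma>2)"
  have L2W: "L2 M (W i)" for i
    unfolding W_def using L2_diff[OF L4_mult[OF L4Z L4Z] L2_const] by (simp add: power2_eq_square)
  have EW: "expectation (W i) = 0" for i
    unfolding W_def using intZ2 EZ2 by (simp add: prob_space)
  have EW2: "expectation (\<lambda>\<omega>. W i \<omega>^2) = \<mu>4 - \<sigma>2^2" for i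
  proof -
    have "(\<lambda>\<omega>. W i \<omega>^2) = (\<lambda>\<omega>. Z i \<omega>^4 + (- 2 * \<sigma>2) * Z i \<omega>^2 + \<sigma>2^2)"
      by (auto simp: W_def fun_eq_iff power2_eq_square power4_eq_xxxx algebra_simps)
    then show ?thesis using intZ2 intZ4 EZ2 EZ4 by (simp add: prob_space power2_eq_square)
  qed
  define S where "S = (\<lambda>n \<omega>. Sf n (\<lambda>i. Z i \<omega>))"
  define U where "U = (\<lambda>n \<omega>. Uf \<sigma>2 n (\<lambda>i. Z i \<omega>))"
  define V where "V = (\<lambda>n \<omega>. Vf n (\<lambda>i. Z i \<omega>))"
  have L4S: "L4 M (S n)" for n
    unfolding S_def Sf_def by (rule L4_sum) (rule L4Z)
  have L2S: "L2 M (S n)" for n using L4_L2[OF L4S] .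
  have L2ZS: "L2 M (\<lambda>\<omega>. Z n \<omega> * S n \<omega>)" for n using L4_mult[OF L4Z L4S] .
  have L2U: "L2 M (U n)" for n
  proof -
    have "U n = (\<lambda>\<omega>. \<Sum>i<n. W i \<omega>)" by (simp add: U_def Uf_def W_def)
    then show ?thesis using L2_sum[of n W] L2W by simp
  qed
  have L2V: "L2 M (V n)" for n
  proof -
    have "V n = (\<lambda>\<omega>. \<Sum>j<n. Z j \<omega> * S j \<omega>)" by (simp add: V_def Vf_def S_def)
    then show ?thesis using L2_sum[of n "\<lambda>j \<omega>. Z j \<omega> * S j \<omega>"] L2ZS by simp
  qed
  have intS: "integrable M (S n)" for n using L2_int[OF L2S] .
  have intU: "integrable M (U n)" for n using L2_int[OF L2U] .
  have intV: "integrable M (V n)" for n using L2_int[OF L2V] .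
  have intW: "integrable M (W n)" for n using L2_int[OF L2W] .
  have ES: "expectation (S n) = 0" for n
  proof -
    have "S n = (\<lambda>\<omega>. \<Sum>i<n. Z i \<omega>)" by (simp add: S_def Sf_def)
    then show ?thesis using intZ EZ by simp
  qed
  have int2: "integrable M (\<lambda>\<omega>. f \<omega> * g \<omega>)" if "L2 M f" "L2 M g" for f g
    using L2_mult_int[OF that] .
  have Ssuc: "S (Suc n) \<omega> = S n \<omega> + Z n \<omega>" for n \<omega> by (simp add: S_def Sf_Suc)
  have Usuc: "U (Suc n) \<omega> = U n \<omega> + W n \<omega>" for n \<omega> by (simp add: U_def Uf_Suc W_def)
  have Vsuc: "V (Suc n) \<omega> = V n \<omega> + Z n \<omega> * S n \<omega>" for n \<omega> by (simp add: V_def Vf_Suc S_def)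
  note lone1 = lone(1)[OF indZ] and lone2 = lone(2)[OF indZ]
  have ESS: "expectation (\<lambda>\<omega>. S n \<omega>^2) = n * \<sigma>2" for n
  proof (induction n)
    case 0 then show ?case by (simp add: S_def Sf_def)
  next
    case (Suc n)
    have e0: "expectation (\<lambda>\<omega>. Z n \<omega> * Sf n (\<lambda>i. Z i \<omega>)) = expectation (\<lambda>\<omega>. Z n \<omega>) * expectation (\<lambda>\<omega>. Sf n (\<lambda>i. Z i \<omega>))"
      by (rule lone1[where h="\<lambda>x. x" and F="Sf n"]) (auto intro: Sf_dep intZ intS[unfolded S_def])
    have e: "expectation (\<lambda>\<omega>. Z n \<omega> * S n \<omega>) = 0"
      using e0 ES[of n] EZ[of n] unfolding S_def by simp
    have iS2: "integrable M (\<lambda>\<omega>. S n \<omega>^2)" using L2S by (simp add: L2_def)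
    have "expectation (\<lambda>\<omega>. S (Suc n) \<omega>^2) = expectation (\<lambda>\<omega>. S n \<omega>^2 + 2 * (Z n \<omega> * S n \<omega>) + Z n \<omega>^2)"
      unfolding Ssuc by (rule arg_cong[where f="integral\<^sup>L M"]) (simp add: fun_eq_iff power2_eq_square algebra_simps)
    also have "\<dots> = expectation (\<lambda>\<omega>. S n \<omega>^2) + 2 * expectation (\<lambda>\<omega>. Z n \<omega> * S n \<omega>) + expectation (\<lambda>\<omega>. Z n \<omega>^2)"
      by (rule int_lin3[OF iS2 int2[OF L2Z L2S] intZ2])
    finally show ?case using e EZ2 Suc by (simp add: algebra_simps)
  qed
  have EUU: "expectation (\<lambda>\<omega>. U n \<omega>^2) = n * (\<mu>4 - \<sigma>2^2)" for n
  proof (induction n)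
    case 0 then show ?case by (simp add: U_def Uf_def)
  next
    case (Suc n)
    have e0: "expectation (\<lambda>\<omega>. (Z n \<omega>^2 - \<sigma>2) * Uf \<sigma>2 n (\<lambda>i. Z i \<omega>)) = expectation (\<lambda>\<omega>. Z n \<omega>^2 - \<sigma>2) * expectation (\<lambda>\<omega>. Uf \<sigma>2 n (\<lambda>i. Z i \<omega>))"
      by (rule lone1[where h="\<lambda>x. x^2 - \<sigma>2" and F="Uf \<sigma>2 n"]) (auto intro: Uf_dep intW[unfolded W_def] intU[unfolded U_def])
    have e: "expectation (\<lambda>\<omega>. W n \<omega> * U n \<omega>) = 0"
      using e0 EW[of n] unfolding U_def W_def by simp
    have iU2: "integrable M (\<lambda>\<omega>. U n \<omega>^2)" using L2U by (simp add: L2_def)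
    have iW2: "integrable M (\<lambda>\<omega>. W n \<omega>^2)" using L2W by (simp add: L2_def)
    have "expectation (\<lambda>\<omega>. U (Suc n) \<omega>^2) = expectation (\<lambda>\<omega>. U n \<omega>^2 + 2 * (W n \<omega> * U n \<omega>) + W n \<omega>^2)"
      unfolding Usuc by (rule arg_cong[where f="integral\<^sup>L M"]) (simp add: fun_eq_iff power2_eq_square algebra_simps)
    also have "\<dots> = expectation (\<lambda>\<omega>. U n \<omega>^2) + 2 * expectation (\<lambda>\<omega>. W n \<omega> * U n \<omega>) + expectation (\<lambda>\<omega>. W n \<omega>^2)"
      by (rule int_lin3[OF iU2 int2[OF L2W L2U] iW2])
    finally show ?case using e EW2 Suc by (simp add: algebra_simps)
  qed
  have EVV: "expectation (\<lambda>\<omega>. V n \<omega>^2) = \<sigma>2^2 * (real n * (real n - 1)) / 2" for n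
  proof (induction n)
    case 0 then show ?case by (simp add: V_def Vf_def)
  next
    case (Suc n)
    have e0: "expectation (\<lambda>\<omega>. Z n \<omega> * (Sf n (\<lambda>i. Z i \<omega>) * Vf n (\<lambda>i. Z i \<omega>))) = expectation (\<lambda>\<omega>. Z n \<omega>) * expectation (\<lambda>\<omega>. Sf n (\<lambda>i. Z i \<omega>) * Vf n (\<lambda>i. Z i \<omega>))"
      by (rule lone1[where h="\<lambda>x. x" and F="\<lambda>f. Sf n f * Vf n f"]) (auto intro: SVf_dep intZ int2[OF L2S L2V, unfolded S_def V_def])
    have i1: "integrable M (\<lambda>\<omega>. Z n \<omega> * (Sf n (\<lambda>i. Z i \<omega>) * Vf n (\<lambda>i. Z i \<omega>)))"
      by (rule lone2[where h="\<lambda>x. x" and F="\<lambda>f. Sf n f * Vf n f"]) (auto intro: SVf_dep intZ int2[OF L2S L2V, unfolded S_def V_def])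
    have i1': "integrable M (\<lambda>\<omega>. Z n \<omega> * (S n \<omega> * V n \<omega>))" using i1 unfolding S_def V_def by simp
    have e1: "expectation (\<lambda>\<omega>. Z n \<omega> * (S n \<omega> * V n \<omega>)) = 0"
      using e0 EZ[of n] unfolding S_def V_def by simp
    have e2': "expectation (\<lambda>\<omega>. Z n \<omega>^2 * (Sf n (\<lambda>i. Z i \<omega>))^2) = expectation (\<lambda>\<omega>. Z n \<omega>^2) * expectation (\<lambda>\<omega>. (Sf n (\<lambda>i. Z i \<omega>))^2)"
      by (rule lone1[where h="\<lambda>x. x^2" and F="\<lambda>f. (Sf n f)^2"]) (use L2S[of n] in \<open>auto intro: Sf2_dep intZ2 simp: S_def L2_def\<close>)
    have e2: "expectation (\<lambda>\<omega>. Z n \<omega>^2 * S n \<omega>^2) = \<sigma>2 * (n * \<sigma>2)"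
      using e2' EZ2[of n] ESS[of n] unfolding S_def by simp
    have iV2: "integrable M (\<lambda>\<omega>. V n \<omega>^2)" using L2V by (simp add: L2_def)
    have iZS: "integrable M (\<lambda>\<omega>. Z n \<omega>^2 * S n \<omega>^2)"
      using int2[OF L2ZS L2ZS] by (simp add: power2_eq_square algebra_simps)
    have "expectation (\<lambda>\<omega>. V (Suc n) \<omega>^2) = expectation (\<lambda>\<omega>. V n \<omega>^2 + 2 * (Z n \<omega> * (S n \<omega> * V n \<omega>)) + Z n \<omega>^2 * S n \<omega>^2)"
      unfolding Vsuc by (rule arg_cong[where f="integral\<^sup>L M"]) (simp add: fun_eq_iff power2_eq_square algebra_simps)
    also have "\<dots> = expectation (\<lambda>\<omega>. V n \<omega>^2) + 2 * expectation (\<lambda>\<omega>. Z n \<omega> * (S n \<omega> * V n \<omega>)) + expectation (\<lambda>\<omega>. Z n \<omega>^2 * S n \<omega>^2)"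
      by (rule int_lin3[OF iV2 i1' iZS])
    finally show ?case using e1 e2 Suc by (simp add: algebra_simps power2_eq_square)
  qed
  have EUV: "expectation (\<lambda>\<omega>. U n \<omega> * V n \<omega>) = 0" for n
  proof (induction n)
    case 0 then show ?case by (simp add: V_def Vf_def)
  next
    case (Suc n)
    have e1': "expectation (\<lambda>\<omega>. (Z n \<omega>^2 - \<sigma>2) * Vf n (\<lambda>i. Z i \<omega>)) = expectation (\<lambda>\<omega>. Z n \<omega>^2 - \<sigma>2) * expectation (\<lambda>\<omega>. Vf n (\<lambda>i. Z i \<omega>))"
      by (rule lone1[where h="\<lambda>x. x^2 - \<sigma>2" and F="Vf n"]) (auto intro: Vf_dep intW[unfolded W_def] intV[unfolded V_def])
    have e1: "expectation (\<lambda>\<omega>. W n \<omega> * V n \<omega>) = 0"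
      using e1' EW[of n] unfolding V_def W_def by simp
    have e2': "expectation (\<lambda>\<omega>. Z n \<omega> * (Uf \<sigma>2 n (\<lambda>i. Z i \<omega>) * Sf n (\<lambda>i. Z i \<omega>))) = expectation (\<lambda>\<omega>. Z n \<omega>) * expectation (\<lambda>\<omega>. Uf \<sigma>2 n (\<lambda>i. Z i \<omega>) * Sf n (\<lambda>i. Z i \<omega>))"
      by (rule lone1[where h="\<lambda>x. x" and F="\<lambda>f. Uf \<sigma>2 n f * Sf n f"]) (auto intro: USf_dep intZ int2[OF L2U L2S, unfolded S_def U_def])
    have i2: "integrable M (\<lambda>\<omega>. Z n \<omega> * (Uf \<sigma>2 n (\<lambda>i. Z i \<omega>) * Sf n (\<lambda>i. Z i \<omega>)))"
      by (rule lone2[where h="\<lambda>x. x" and F="\<lambda>f. Uf \<sigma>2 n f * Sf n f"]) (auto intro: USf_dep intZ int2[OF L2U L2S, unfolded S_def U_def])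
    have i2': "integrable M (\<lambda>\<omega>. Z n \<omega> * (U n \<omega> * S n \<omega>))" using i2 unfolding S_def U_def by simp
    have e2: "expectation (\<lambda>\<omega>. Z n \<omega> * (U n \<omega> * S n \<omega>)) = 0"
      using e2' EZ[of n] unfolding S_def U_def by simp
    have e3': "expectation (\<lambda>\<omega>. ((Z n \<omega>^2 - \<sigma>2) * Z n \<omega>) * Sf n (\<lambda>i. Z i \<omega>)) = expectation (\<lambda>\<omega>. (Z n \<omega>^2 - \<sigma>2) * Z n \<omega>) * expectation (\<lambda>\<omega>. Sf n (\<lambda>i. Z i \<omega>))"
      by (rule lone1[where h="\<lambda>x. (x^2 - \<sigma>2) * x" and F="Sf n"]) (auto intro: Sf_dep int2[OF L2W L2Z, unfolded W_def] intS[unfolded S_def])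
    have i3: "integrable M (\<lambda>\<omega>. ((Z n \<omega>^2 - \<sigma>2) * Z n \<omega>) * Sf n (\<lambda>i. Z i \<omega>))"
      by (rule lone2[where h="\<lambda>x. (x^2 - \<sigma>2) * x" and F="Sf n"]) (auto intro: Sf_dep int2[OF L2W L2Z, unfolded W_def] intS[unfolded S_def])
    have i3': "integrable M (\<lambda>\<omega>. (W n \<omega> * Z n \<omega>) * S n \<omega>)" using i3 unfolding S_def W_def by simp
    have e3: "expectation (\<lambda>\<omega>. (W n \<omega> * Z n \<omega>) * S n \<omega>) = 0"
      using e3' ES[of n] unfolding S_def W_def by simp
    have "expectation (\<lambda>\<omega>. U (Suc n) \<omega> * V (Suc n) \<omega>) = expectation (\<lambda>\<omega>. (U n \<omega> * V n \<omega> + W n \<omega> * V n \<omega>)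
        + 1 * (Z n \<omega> * (U n \<omega> * S n \<omega>)) + (W n \<omega> * Z n \<omega>) * S n \<omega>)"
      unfolding Usuc Vsuc by (rule arg_cong[where f="integral\<^sup>L M"]) (simp add: fun_eq_iff algebra_simps)
    also have "\<dots> = expectation (\<lambda>\<omega>. U n \<omega> * V n \<omega> + W n \<omega> * V n \<omega>) + 1 * expectation (\<lambda>\<omega>. Z n \<omega> * (U n \<omega> * S n \<omega>)) + expectation (\<lambda>\<omega>. (W n \<omega> * Z n \<omega>) * S n \<omega>)"
      by (rule int_lin3[OF Bochner_Integration.integrable_add[OF int2[OF L2U L2V] int2[OF L2W L2V]] i2' i3'])
    also have "expectation (\<lambda>\<omega>. U n \<omega> * V n \<omega> + W n \<omega> * V n \<omega>) = expectation (\<lambda>\<omega>. U n \<omega> * V n \<omega>) + expectation (\<lambda>\<omega>. W n \<omega> * V n \<omega>)"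
      by (rule Bochner_Integration.integral_add[OF int2[OF L2U L2V] int2[OF L2W L2V]])
    finally show ?case using e1 e2 e3 Suc by simp
  qed
  define a where "a = 1 / real N"
  define b where "b = 2 / (real N * (real N - 1))"
  have eqS: "sample_var (\<lambda>i. X i \<omega>) N - \<sigma>2 = a * U N \<omega> - b * V N \<omega>" for \<omega>
    using sample_var_expand[OF N, of "\<lambda>i. X i \<omega>" \<sigma>2 \<mu>]
    by (simp add: a_def b_def U_def V_def Z_def)
  have sq: "(\<lambda>\<omega>. (sample_var (\<lambda>i. X i \<omega>) N - \<sigma>2)^2) =
     (\<lambda>\<omega>. a^2 * (U N \<omega>)^2 + (- 2 * a * b) * (U N \<omega> * V N \<omega>) + b^2 * (V N \<omega>)^2)"
    unfolding eqS by (simp add: fun_eq_iff power2_eq_square algebra_simps)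
  have iU2: "integrable M (\<lambda>\<omega>. U N \<omega>^2)" using L2U by (simp add: L2_def)
  have iV2: "integrable M (\<lambda>\<omega>. V N \<omega>^2)" using L2V by (simp add: L2_def)
  have iUV: "integrable M (\<lambda>\<omega>. U N \<omega> * V N \<omega>)" using int2[OF L2U L2V] .
  show "integrable M (\<lambda>\<omega>. (sample_var (\<lambda>i. X i \<omega>) N - pop_var M (X 0))^2)"
    unfolding \<sigma>2_def[symmetric] sq using iU2 iV2 iUV by simp
  have "expectation (\<lambda>\<omega>. (sample_var (\<lambda>i. X i \<omega>) N - \<sigma>2)^2)
      = a^2 * expectation (\<lambda>\<omega>. U N \<omega>^2) + (- 2 * a * b) * expectation (\<lambda>\<omega>. U N \<omega> * V N \<omega>) + b^2 * expectation (\<lambda>\<omega>. V N \<omega>^2)"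
    unfolding sq using iU2 iV2 iUV by simp
  also have "\<dots> = (\<mu>4 - \<sigma>2^2) / N + 2 * \<sigma>2^2 / (real N * (real N - 1))"
  proof -
    have n1: "real N - 1 > 0" "real N > 0" using N by auto
    have t1: "a^2 * (real N * (\<mu>4 - \<sigma>2^2)) = (\<mu>4 - \<sigma>2^2) / N"
      using n1 by (simp add: a_def power2_eq_square field_simps)
    have t2: "b^2 * (\<sigma>2^2 * (real N * (real N - 1)) / 2) = 2 * \<sigma>2^2 / (real N * (real N - 1))"
    proof -
      define d where "d = real N * (real N - 1)"
      have "d > 0" using n1 by (simp add: d_def)
      then have "(2/d)^2 * (\<sigma>2^2 * d / 2) = 2 * \<sigma>2^2 / d"
        by (simp add: power2_eq_square field_simps)
      then show ?thesis by (simp add: b_def d_def)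
    qed
    show ?thesis unfolding EUU EUV EVV t1 t2 by simp
  qed
  also have "\<dots> \<le> \<mu>4 / N"
  proof -
    have "3 * \<sigma>2^2 \<le> real N * \<sigma>2^2" using N by (intro mult_right_mono) auto
    then have "2 * \<sigma>2^2 / (real N * (real N - 1)) \<le> \<sigma>2^2 / N"
      using N by (simp add: field_simps)
    then show ?thesis by (simp add: diff_divide_distrib)
  qed
  finally show "expectation (\<lambda>\<omega>. (sample_var (\<lambda>i. X i \<omega>) N - pop_var M (X 0))^2)
         \<le> expectation (\<lambda>x. (X 0 x - pop_mean M (X 0))^4) / N"
    unfolding \<sigma>2_def \<mu>4_def \<mu>_def .
qed
end


lemma rho_bound:
  fixes x y d :: real
  assumes "0 < x" "0 < y" "0 \<le> d" "d \<le> 3/5" "\<bar>x^2 - 1\<bar> \<le> d" "\<bar>y^2 - 1\<bar> \<le> d"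
  shows "(1 - x/y)^2 \<le> 25/9 * d^2"
proof -
  have d1: "5*d \<le> 3" using assms by linarith
  have d2: "25*d^2 \<le> 9"
  proof -
    have "d^2 \<le> (3/5)^2" using assms by (intro power_mono) auto
    then show ?thesis by (simp add: power2_eq_square)
  qed
  have up: "x \<le> (1 + 5*d/3) * y"
  proof (rule power2_le_imp_le)
    have "x^2 \<le> 1 + d" using assms by linarith
    also have "\<dots> \<le> (1 + 5*d/3)^2 * (1 - d)"
    proof -
      have "(1 + 5*d/3)^2 * (1 - d) - (1 + d) = d * (12 - 5*d - 25*d^2) / 9"
        by (simp add: power2_eq_square field_simps)
      moreover have "0 \<le> d * (12 - 5*d - 25*d^2) / 9" using d1 d2 assms by simp
      ultimately show ?thesis by linarith
    qed
    also have "\<dots> \<le> (1 + 5*d/3)^2 * y^2" using assms by (intro mult_left_mono) auto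
    finally show "x^2 \<le> ((1 + 5*d/3) * y)^2" by (simp add: power_mult_distrib)
    show "0 \<le> (1 + 5*d/3) * y" using assms by simp
  qed
  have lo: "(1 - 5*d/3) * y \<le> x"
  proof (cases "1 - 5*d/3 \<le> 0")
    case True then show ?thesis using assms by (meson less_le mult_nonpos_nonneg order_trans)
  next
    case False
    show ?thesis
    proof (rule power2_le_imp_le)
      have "((1 - 5*d/3) * y)^2 = (1 - 5*d/3)^2 * y^2" by (simp add: power_mult_distrib)
      also have "\<dots> \<le> (1 - 5*d/3)^2 * (1 + d)" using assms by (intro mult_left_mono) auto
      also have "\<dots> \<le> 1 - d"
      proof -
        have "(1 - d) - (1 - 5*d/3)^2 * (1 + d) = d * (12 + 5*d - 25*d^2) / 9"
          by (simp add: power2_eq_square field_simps)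
        moreover have "0 \<le> d * (12 + 5*d - 25*d^2) / 9" using d1 d2 assms by simp
        ultimately show ?thesis by linarith
      qed
      also have "\<dots> \<le> x^2" using assms by linarith
      finally show "((1 - 5*d/3) * y)^2 \<le> x^2" .
      show "0 \<le> x" using assms by simp
    qed
  qed
  have yx: "\<bar>y - x\<bar> \<le> 5*d/3 * y"
  proof -
    have h1: "x - y \<le> 5/3*(d*y)" using up by (simp add: algebra_simps)
    have h2: "y - x \<le> 5/3*(d*y)" using lo by (simp add: algebra_simps)
    have "\<bar>y - x\<bar> \<le> 5/3*(d*y)" by (rule abs_leI) (use h1 h2 in linarith)+
    then show ?thesis by (simp add: algebra_simps)
  qed
  have e: "1 - x/y = (y - x)/y" using assms by (simp add: diff_divide_distrib)
  have "\<bar>1 - x/y\<bar> = \<bar>y - x\<bar> / y" unfolding e using assms by (simp add: abs_divide)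
  also have "\<dots> \<le> 5*d/3" using yx assms by (simp add: pos_divide_le_eq)
  finally have a: "\<bar>1 - x/y\<bar> \<le> 5*d/3" .
  have "(1 - x/y)^2 = \<bar>1 - x/y\<bar>^2" by simp
  also have "\<dots> \<le> (5*d/3)^2" by (rule power_mono[OF a abs_ge_zero])
  finally show ?thesis by (simp add: power2_eq_square)
qed

lemma ratio_eq:
  fixes s1 s0 T \<tau> :: real
  assumes "0 < s1" "0 < s0" "0 < T" "0 < \<tau>" "\<tau> < 1"
  defines "c \<equiv> s0 * (1 - \<tau>) / (s1 * \<tau>)"
  shows "proxyV s1 s0 ((1 - \<tau>) * T) (\<tau> * T) / neymanV s1 s0 T = 1 + \<tau> * (1 - \<tau>) * (1 - c)^2 / (1 - \<tau> + c * \<tau>)^2"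
proof -
  have nz: "1 - \<tau> \<noteq> 0" "\<tau> \<noteq> 0" "s1 + s0 \<noteq> 0" "s1 \<noteq> 0" "T \<noteq> 0" using assms by auto
  have L: "proxyV s1 s0 ((1 - \<tau>) * T) (\<tau> * T) / neymanV s1 s0 T = (s1^2/(1-\<tau>) + s0^2/\<tau>)/(s1+s0)^2"
    unfolding proxyV_def neymanV_def using nz by (simp add: field_simps)
  have K: "(s1^2/(1-\<tau>) + s0^2/\<tau>)/(s1+s0)^2 = 1 + (s1*\<tau> - s0*(1-\<tau>))^2/(\<tau>*(1-\<tau>)*(s1+s0)^2)"
  proof -
    have D: "\<tau>*(1-\<tau>)*(s1+s0)^2 \<noteq> 0" using nz by simp
    have "s1^2/(1-\<tau>) + s0^2/\<tau> = (s1^2*\<tau> + s0^2*(1-\<tau>))/(\<tau>*(1-\<tau>))"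
      using nz by (simp add: field_simps)
    also have "s1^2*\<tau> + s0^2*(1-\<tau>) = \<tau>*(1-\<tau>)*(s1+s0)^2 + (s1*\<tau> - s0*(1-\<tau>))^2"
      by (simp add: power2_eq_square algebra_simps)
    finally have "(s1^2/(1-\<tau>) + s0^2/\<tau>)/(s1+s0)^2 = (\<tau>*(1-\<tau>)*(s1+s0)^2 + (s1*\<tau> - s0*(1-\<tau>))^2) / (\<tau>*(1-\<tau>)*(s1+s0)^2)"
      using nz by (simp add: field_simps)
    also have "\<dots> = 1 + (s1*\<tau> - s0*(1-\<tau>))^2/(\<tau>*(1-\<tau>)*(s1+s0)^2)"
      using D by (simp add: add_divide_distrib)
    finally show ?thesis .
  qed
  have c: "1 - \<tau> + c * \<tau> = (1 - \<tau>) * (s1 + s0) / s1" using nz by (simp add: c_def field_simps)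
  have c2: "1 - c = (s1 * \<tau> - s0 * (1 - \<tau>)) / (s1 * \<tau>)" using nz by (simp add: c_def field_simps)
  have R: "\<tau> * (1 - \<tau>) * (1 - c)^2 / (1 - \<tau> + c * \<tau>)^2 = (s1*\<tau> - s0*(1-\<tau>))^2/(\<tau>*(1-\<tau>)*(s1+s0)^2)"
  proof -
    have gen: "ta * va * ((s1 * ta - s0 * va) / (s1 * ta))^2 / (va * (s1 + s0) / s1)^2 = (s1*ta - s0 * va)^2/(ta * va*(s1+s0)^2)"
      if "ta \<noteq> 0" "va \<noteq> 0" for ta va :: real
    proof -
      have "ta * va * ((s1 * ta - s0 * va) / (s1 * ta))^2 / (va * (s1 + s0) / s1)^2
          = (ta * va * (s1 * ta - s0 * va)^2 * s1^2) / ((s1 * ta)^2 * (va * (s1 + s0))^2)"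
        by (simp add: power_divide)
      also have "\<dots> = ((s1*ta - s0 * va)^2 * (s1^2 * ta * va)) / ((ta * va * (s1+s0)^2) * (s1^2 * ta * va))"
        by (simp add: power2_eq_square algebra_simps)
      also have "\<dots> = (s1*ta - s0 * va)^2/(ta * va * (s1+s0)^2)"
        using that nz by (intro mult_divide_mult_cancel_right) simp
      finally show ?thesis .
    qed
    show ?thesis unfolding c c2 using gen[of \<tau> "1 - \<tau>"] nz by simp
  qed
  show ?thesis unfolding L K R ..
qed

lemma ratio_clip:
  fixes s1 s0 T \<tau> :: real
  assumes "0 < s1" "0 < s0" "0 < T" "0 < \<tau>" "\<tau> < 1"
  shows "proxyV s1 s0 ((1 - \<tau>) * T) (\<tau> * T) / neymanV s1 s0 T \<le> 1 + \<tau> * (1 - s0 * (1 - \<tau>) / (s1 * \<tau>))^2 / (1 - \<tau>)"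
proof -
  define c where "c = s0 * (1 - \<tau>) / (s1 * \<tau>)"
  have c0: "0 < c" using assms by (simp add: c_def)
  have w: "(1 - \<tau>)^2 \<le> (1 - \<tau> + c * \<tau>)^2" using assms c0 by (intro power_mono) auto
  have wp: "0 < (1 - \<tau>)^2" using assms by simp
  have q: "(1 - \<tau>) / (1 - \<tau> + c * \<tau>)^2 \<le> 1 / (1 - \<tau>)"
    using w wp assms by (simp add: divide_simps power2_eq_square)
  have "\<tau> * (1 - \<tau>) * (1 - c)^2 / (1 - \<tau> + c * \<tau>)^2 = (\<tau> * (1 - c)^2) * ((1 - \<tau>) / (1 - \<tau> + c * \<tau>)^2)"
    by simp
  also have "\<dots> \<le> (\<tau> * (1 - c)^2) * (1 / (1 - \<tau>))"
    using q assms by (intro mult_left_mono) auto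
  finally have "\<tau> * (1 - \<tau>) * (1 - c)^2 / (1 - \<tau> + c * \<tau>)^2 \<le> \<tau> * (1 - c)^2 / (1 - \<tau>)"
    by simp
  then show ?thesis using ratio_eq[OF assms] by (simp add: c_def)
qed

lemma ratio_ney:
  fixes s1 s0 T \<tau> :: real
  assumes "0 < s1" "0 < s0" "0 < T" "0 < \<tau>" "\<tau> < 1"
  shows "proxyV s1 s0 ((1 - \<tau>) * T) (\<tau> * T) / neymanV s1 s0 T \<le> 1 + (1 - s0 * (1 - \<tau>) / (s1 * \<tau>))^2 / (4 * (s0 * (1 - \<tau>) / (s1 * \<tau>)))"
proof -
  define c where "c = s0 * (1 - \<tau>) / (s1 * \<tau>)"
  have c0: "0 < c" using assms by (simp add: c_def)
  have q: "4 * c * (\<tau> * (1 - \<tau>)) \<le> (1 - \<tau> + c * \<tau>)^2"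
  proof -
    have "(1 - \<tau> + c * \<tau>)^2 - 4 * c * (\<tau> * (1 - \<tau>)) = (1 - \<tau> - c * \<tau>)^2"
      by (simp add: power2_eq_square algebra_simps)
    then show ?thesis using zero_le_power2[of "1 - \<tau> - c * \<tau>"] by linarith
  qed
  have "0 < c * \<tau>" using c0 assms by simp
  then have "0 < 1 - \<tau> + c * \<tau>" using assms by linarith
  then have pos: "0 < (1 - \<tau> + c * \<tau>)^2" by simp
  have "\<tau> * (1 - \<tau>) * (1 - c)^2 / (1 - \<tau> + c * \<tau>)^2 \<le> (1 - c)^2 / (4 * c)"
  proof -
    have "\<tau> * (1 - \<tau>) * (1 - c)^2 * (4 * c) \<le> (1 - c)^2 * (1 - \<tau> + c * \<tau>)^2"
      using mult_left_mono[OF q, of "(1-c)^2"] by (simp add: algebra_simps)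
    then show ?thesis using pos c0 by (simp add: divide_le_eq le_divide_eq mult.commute mult.left_commute)
  qed
  then show ?thesis using ratio_eq[OF assms] by (simp add: c_def)
qed



lemma stage_L:
  fixes M T :: nat
  assumes M: "3 \<le> M" and T: "16 \<le> T"
  defines "L \<equiv> (real T / 15) powr (1 / real M)"
  shows "1 < L" "L ^ M = real T / 15" "\<And>m. m < M \<Longrightarrow> half_end M T m = 3 * L ^ m"
    "\<And>m. m < M \<Longrightarrow> stage_end M T m = 6 * L ^ m"
proof -
  have T15: "1 < real T / 15" using T by simp
  have Mp: "0 < real M" using M by simp
  show L1: "1 < L" unfolding L_def using T15 Mp by (simp add: gr_one_powr)
  have Lpow: "L ^ m = (real T / 15) powr (real m / real M)" for m
  proof -
    have "L ^ m = L powr real m" using L1 by (simp add: powr_realpow)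
    also have "\<dots> = (real T / 15) powr (1 / real M * real m)" unfolding L_def by (simp add: powr_powr)
    finally show ?thesis by simp
  qed
  show "L ^ M = real T / 15" using Lpow[of M] Mp by simp
  show se: "stage_end M T m = 6 * L ^ m" if "m < M" for m
  proof -
    have "stage_end M T m = 6 * 15 powr (- (real m / real M)) * real T powr (real m / real M)"
      using that by (simp add: stage_end_def beta_def)
    also have "\<dots> = 6 * (real T powr (real m / real M) / 15 powr (real m / real M))"
      by (simp add: powr_minus divide_inverse)
    also have "\<dots> = 6 * (real T / 15) powr (real m / real M)"
      by (simp add: powr_divide)
    finally show ?thesis using Lpow by simp
  qed
  show "half_end M T m = 3 * L ^ m" if "m < M" for m
    using se[OF that] by (simp add: half_end_def)
qed

lemma bern_1: "(15::real) \<le> (27/25) ^ 100"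
proof -
  have "1 + real 25 * (2/25) \<le> (1 + 2/25::real) ^ 25" by (rule Bernoulli_inequality) simp
  then have a: "3 \<le> (27/25::real) ^ 25" by simp
  have "(3::real)^4 \<le> ((27/25) ^ 25) ^ 4" using a by (intro power_mono) auto
  then show ?thesis by (simp flip: power_mult)
qed

lemma u_bounds:
  fixes M T :: nat and \<epsilon> :: real
  assumes M: "3 \<le> M" and T: "16 \<le> T" and e0: "0 < \<epsilon>" and e1: "\<epsilon> \<le> min (1 / real M) (1 / 100)"
  defines "L \<equiv> (real T / 15) powr (1 / real M)"
  shows "1 \<le> real T powr \<epsilon>" "real T powr \<epsilon> \<le> 27/25 * L"
proof -
  have T1: "1 \<le> real T" using T by simp
  show "1 \<le> real T powr \<epsilon>" using T1 e0 by (simp add: ge_one_powr_ge_zero)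
  have Tp: "0 < real T" using T by simp
  have Mp: "0 < real M" using M by simp
  have l15: "ln 15 \<le> 100 * ln (27/25::real)"
  proof -
    have "ln (15::real) \<le> ln ((27/25) ^ 100)" using bern_1 by simp
    also have "\<dots> = 100 * ln (27/25::real)" by (simp add: ln_realpow)
    finally show ?thesis .
  qed
  have lT: "ln 15 \<le> ln (real T)" using T by simp
  have "\<epsilon> * ln (real T) = \<epsilon> * (ln (real T) - ln 15) + \<epsilon> * ln 15" by (simp add: algebra_simps)
  also have "\<dots> \<le> (1 / real M) * (ln (real T) - ln 15) + (1/100) * ln 15"
  proof (rule add_mono)
    show "\<epsilon> * (ln (real T) - ln 15) \<le> (1 / real M) * (ln (real T) - ln 15)"
      using e1 lT by (intro mult_right_mono) auto
    show "\<epsilon> * ln 15 \<le> (1/100) * ln 15"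
      using e1 by (intro mult_right_mono) auto
  qed
  also have "\<dots> \<le> (1 / real M) * (ln (real T) - ln 15) + ln (27/25)"
    using l15 by simp
  finally have key: "\<epsilon> * ln (real T) \<le> ln (27/25) + (ln (real T) - ln 15) / real M" by simp
  have "real T powr \<epsilon> = exp (\<epsilon> * ln (real T))" using Tp by (simp add: powr_def)
  also have "\<dots> \<le> exp (ln (27/25) + (ln (real T) - ln 15) / real M)" using key by simp
  also have "\<dots> = exp (ln (27/25)) * exp ((ln (real T) - ln 15) / real M)"
    by (simp add: exp_add)
  also have "\<dots> = 27/25 * L"
  proof -
    have "ln (real T / 15) = ln (real T) - ln 15" using Tp by (simp add: ln_div)
    then have "L = exp ((ln (real T) - ln 15) / real M)"
      unfolding L_def using Tp by (simp add: powr_def)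
    moreover have "exp (ln (27/25::real)) = 27/25" by simp
    ultimately show ?thesis by simp
  qed
  finally show "real T powr \<epsilon> \<le> 27/25 * L" .
qed

lemma n_obs_ge:
  assumes "0 \<le> c" shows "c \<le> real (n_obs c)"
proof -
  have "{i::nat. real i < c} = {..< nat \<lceil>c\<rceil>}"
  proof (safe)
    fix i :: nat assume "real i < c"
    then have "int i < \<lceil>c\<rceil>" by (simp add: less_ceiling_iff)
    then show "i < nat \<lceil>c\<rceil>" by simp
  next
    fix i :: nat assume "i < nat \<lceil>c\<rceil>"
    then have "int i < \<lceil>c\<rceil>" by simp
    then show "real i < c" by (simp add: less_ceiling_iff)
  qed
  then have "n_obs c = nat \<lceil>c\<rceil>" by (simp add: n_obs_def)
  then show ?thesis using assms by (simp add: of_nat_ceiling)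
qed



lemma rho_from_good:
  fixes v s \<delta> :: real
  assumes "\<bar>v - s^2\<bar> < \<delta> * s^2" "0 < s" "\<delta> \<le> 3/5"
  shows "0 < sqrt v" "\<bar>(sqrt v / s)^2 - 1\<bar> \<le> \<delta>"
proof -
  have s2: "0 < s^2" using assms by simp
  have "v > s^2 - \<delta> * s^2" using assms by linarith
  moreover have "\<delta> * s^2 \<le> 3/5 * s^2" using assms s2 by (intro mult_right_mono) auto
  ultimately have vp: "0 < v" using s2 by linarith
  then show "0 < sqrt v" by simp
  have "(sqrt v / s)^2 - 1 = (v - s^2) / s^2" using vp s2 by (simp add: power_divide field_simps)
  then have "\<bar>(sqrt v / s)^2 - 1\<bar> = \<bar>v - s^2\<bar> / s^2" by (simp add: abs_divide)
  also have "\<dots> \<le> \<delta>" using assms s2 by (simp add: divide_le_eq)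
  finally show "\<bar>(sqrt v / s)^2 - 1\<bar> \<le> \<delta>" .
qed

lemma pair_bound:
  fixes v1 v0 s1 s0 \<delta> :: real
  assumes "\<bar>v1 - s1^2\<bar> < \<delta> * s1^2" "\<bar>v0 - s0^2\<bar> < \<delta> * s0^2" "0 < s1" "0 < s0" "0 \<le> \<delta>" "\<delta> \<le> 3/5"
  shows "0 < sqrt v1" "0 < sqrt v0"
    "(1 - (sqrt v1 * s0) / (sqrt v0 * s1))^2 \<le> 25/9 * \<delta>^2"
    "(1 - (sqrt v0 * s1) / (sqrt v1 * s0))^2 \<le> 25/9 * \<delta>^2"
proof -
  note r1 = rho_from_good[OF assms(1,3,6)] and r0 = rho_from_good[OF assms(2,4,6)]
  show "0 < sqrt v1" "0 < sqrt v0" using r1 r0 by auto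
  have p1: "0 < sqrt v1 / s1" and p0: "0 < sqrt v0 / s0" using r1 r0 assms by auto
  have e1: "(sqrt v1 / s1) / (sqrt v0 / s0) = (sqrt v1 * s0) / (sqrt v0 * s1)" by (simp add: field_simps)
  have e0: "(sqrt v0 / s0) / (sqrt v1 / s1) = (sqrt v0 * s1) / (sqrt v1 * s0)" by (simp add: field_simps)
  show "(1 - (sqrt v1 * s0) / (sqrt v0 * s1))^2 \<le> 25/9 * \<delta>^2"
    using rho_bound[OF p1 p0 assms(5,6) r1(2) r0(2)] unfolding e1 .
  show "(1 - (sqrt v0 * s1) / (sqrt v1 * s0))^2 \<le> 25/9 * \<delta>^2"
    using rho_bound[OF p0 p1 assms(5,6) r0(2) r1(2)] unfolding e0 .
qed

lemma cond_conv:
  fixes qA qB sA sB a T :: real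
  assumes "0 < qA" "0 < qB" "0 < sA" "0 < sB" "0 < a" "a < T"
  shows "(qB / (qA + qB) * T < a) \<longleftrightarrow> (sB * (1 - a/T) / (sA * (a/T)) < (qA * sB) / (qB * sA))"
proof -
  have T: "0 < T" using assms by linarith
  have "(qB / (qA + qB) * T < a) \<longleftrightarrow> qB * T < a * (qA + qB)"
    using assms by (simp add: divide_less_eq pos_divide_less_eq mult.commute)
  also have "\<dots> \<longleftrightarrow> qB * (T - a) < a * qA" by (simp add: algebra_simps)
  also have "\<dots> \<longleftrightarrow> sB * (1 - a/T) / (sA * (a/T)) < (qA * sB) / (qB * sA)"
  proof -
    have l: "sB * (1 - a/T) / (sA * (a/T)) = sB * (T - a) / (sA * a)" using T assms by (simp add: field_simps)
    have "sB * (T - a) / (sA * a) < (qA * sB) / (qB * sA) \<longleftrightarrow> sB * (T - a) * (qB * sA) < (qA * sB) * (sA * a)"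
      using assms by (simp add: frac_less_eq divide_less_eq less_divide_eq)
    also have "\<dots> \<longleftrightarrow> (sB * sA) * (qB * (T - a)) < (sB * sA) * (a * qA)" by (simp add: algebra_simps)
    also have "\<dots> \<longleftrightarrow> qB * (T - a) < a * qA" using assms by simp
    finally have X: "sB * (T - a) / (sA * a) < (qA * sB) / (qB * sA) \<longleftrightarrow> qB * (T - a) < a * qA" .
    show ?thesis by (simp only: l) (rule X[symmetric])
  qed
  finally show ?thesis .
qed

lemma swapV: "proxyV a b t1 t0 = proxyV b a t0 t1" "neymanV a b T = neymanV b a T"
  by (simp_all add: proxyV_def neymanV_def add.commute)

lemma out_clip:
  fixes sA sB a T :: real
  assumes "0 < sA" "0 < sB" "0 < a" "a < T"
  shows "proxyV sA sB (T - a) a / neymanV sA sB T \<le> 1 + (a/T) * (1 - sB * (1 - a/T) / (sA * (a/T)))^2 / (1 - a/T)"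
proof -
  have T: "0 < T" using assms by linarith
  have "(1 - a/T) * T = T - a" "(a/T) * T = a" using T by (simp_all add: field_simps)
  then show ?thesis using ratio_clip[OF assms(1,2) T, of "a/T"] assms T by simp
qed

lemma out_est:
  fixes qA qB sA sB T :: real
  assumes "0 < qA" "0 < qB" "0 < sA" "0 < sB" "0 < T"
  shows "proxyV sA sB (T - qB / (qA + qB) * T) (qB / (qA + qB) * T) / neymanV sA sB T
     \<le> 1 + (qB / (qA + qB)) * (1 - (qA * sB) / (qB * sA))^2 / (1 - qB / (qA + qB))"
    "proxyV sA sB (T - qB / (qA + qB) * T) (qB / (qA + qB) * T) / neymanV sA sB T
     \<le> 1 + (1 - (qA * sB) / (qB * sA))^2 / (4 * ((qA * sB) / (qB * sA)))"
proof -
  define r where "r = qB / (qA + qB)"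
  have r0: "0 < r" "r < 1" using assms by (simp_all add: r_def)
  have e1: "(1 - r) * T = T - r * T" by (simp add: algebra_simps)
  have e2: "sB * (1 - r) / (sA * r) = (qA * sB) / (qB * sA)"
  proof -
    have nz: "qA + qB \<noteq> 0" using assms by simp
    have "1 - r = qA / (qA + qB)" using nz by (simp add: r_def field_simps)
    then have "sB * (1 - r) / (sA * r) = (sB * qA / (qA + qB)) / (sA * qB / (qA + qB))" by (simp add: r_def)
    also have "\<dots> = (sB * qA) / (sA * qB)" using nz by simp
    finally show ?thesis by (simp add: mult.commute)
  qed
  show "proxyV sA sB (T - qB / (qA + qB) * T) (qB / (qA + qB) * T) / neymanV sA sB T
     \<le> 1 + (qB / (qA + qB)) * (1 - (qA * sB) / (qB * sA))^2 / (1 - qB / (qA + qB))"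
    using ratio_clip[OF assms(3,4,5) r0] unfolding e1 e2 unfolding r_def .
  show "proxyV sA sB (T - qB / (qA + qB) * T) (qB / (qA + qB) * T) / neymanV sA sB T
     \<le> 1 + (1 - (qA * sB) / (qB * sA))^2 / (4 * ((qA * sB) / (qB * sA)))"
    using ratio_ney[OF assms(3,4,5) r0] unfolding e1 e2 unfolding r_def .
qed

lemma num_max:
  fixes lo c hi :: real
  assumes "lo \<le> c" "c \<le> hi"
  shows "(1 - c)^2 \<le> max ((1 - lo)^2) ((1 - hi)^2)"
proof (cases "c \<le> 1")
  case True
  then have "(1 - c)^2 \<le> (1 - lo)^2" using assms by (intro power_mono) auto
  then show ?thesis by simp
next
  case False
  then have "(c - 1)^2 \<le> (hi - 1)^2" using assms by (intro power_mono) auto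
  then show ?thesis by (simp add: power2_commute)
qed

lemma num_frac:
  fixes \<alpha> K B :: real
  assumes "0 < \<alpha>" "\<alpha> \<le> 1/5" "0 \<le> K" "\<alpha> * K \<le> B"
  shows "\<alpha> * K / (1 - \<alpha>) \<le> 5/4 * B"
proof -
  have "\<alpha> * K / (1 - \<alpha>) \<le> \<alpha> * K / (4/5)"
    using assms by (intro divide_left_mono) auto
  also have "\<dots> = 5/4 * (\<alpha> * K)" by simp
  also have "\<dots> \<le> 5/4 * B" using assms(4) by linarith
  finally show ?thesis .
qed

lemma num_ney:
  fixes x :: real
  assumes "0 < x"
  shows "(1 - x)^2 / (4 * x) \<le> max ((1 - x)^2) ((1 - 1/x)^2) / 4"
proof (cases "1 \<le> x")
  case True
  have "(1 - x)^2 / (4 * x) \<le> (1 - x)^2 / 4"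
    using True by (intro divide_left_mono) auto
  then show ?thesis by (simp add: max_def divide_right_mono)
next
  case False
  have "(1 - x)^2 / (4 * x) = x * (1 - 1/x)^2 / 4" using assms by (simp add: field_simps power2_eq_square)
  also have "\<dots> \<le> (1 - 1/x)^2 / 4" using False assms
    by (intro divide_right_mono mult_left_le_one_le) auto
  finally show ?thesis by (simp add: max_def divide_right_mono)
qed



lemma num_pow:
  fixes L T u :: real
  assumes "0 < L" "0 < T" "1 \<le> m"
  shows "3 * L^m / T * (25/9 * (u / (3 * L^(m-1)))) = 25/9 * u * L / T"
proof -
  have "L^m = L * L^(m-1)" using assms(3) by (metis Suc_diff_1 less_le_trans power_Suc zero_less_one)
  then show ?thesis using assms by (simp add: field_simps)
qed

lemma finish:
  fixes \<alpha> K u L T :: real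
  assumes "0 < \<alpha>" "\<alpha> \<le> 1/5" "0 \<le> K" "\<alpha> * K \<le> 3 * u * L / T"
  shows "\<alpha> * K / (1 - \<alpha>) \<le> 4 * u * L / T"
proof -
  have "\<alpha> * K / (1 - \<alpha>) \<le> 5/4 * (3 * u * L / T)" by (rule num_frac[OF assms])
  also have "\<dots> \<le> 4 * u * L / T"
  proof -
    have "0 \<le> \<alpha> * K" using assms by simp
    then have y: "0 \<le> 3 * u * L / T" using assms(4) by linarith
    define w where "w = u * L / T"
    have e: "3 * u * L / T = 3 * w" "4 * u * L / T = 4 * w" by (simp_all add: w_def)
    show ?thesis using y unfolding e by linarith
  qed
  finally show ?thesis .
qed

lemma det_main:
  fixes M T :: nat and u L s1 s0 :: real and y1 y0 :: "nat \<Rightarrow> real"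
  assumes M3: "3 \<le> M" and T16: "16 \<le> T"
    and L1: "1 < L" and LM: "L ^ M = real T / 15"
    and he: "\<And>m. m < M \<Longrightarrow> half_end M T m = 3 * L ^ m"
    and u1: "1 \<le> u" and uL: "u \<le> 27/25 * L"
    and s1p: "0 < s1" and s0p: "0 < s0"
    and good: "\<And>m. 1 \<le> m \<Longrightarrow> m \<le> M - 1 \<Longrightarrow>
        \<bar>sample_var y1 (n_obs (half_end M T m)) - s1^2\<bar> < sqrt (u / n_obs (half_end M T m)) * s1^2 \<and>
        \<bar>sample_var y0 (n_obs (half_end M T m)) - s0^2\<bar> < sqrt (u / n_obs (half_end M T m)) * s0^2"
  shows "(case alg M T y1 y0 1 of (t1, t0) \<Rightarrow> proxyV s1 s0 t1 t0 / neymanV s1 s0 (real T)) \<le> 1 + 4 * u * L / real T"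
proof -
  define A where "A = (\<lambda>m. half_end M T m)"
  define N where "N = (\<lambda>m. n_obs (A m))"
  define q1 where "q1 = (\<lambda>m. sample_sd y1 (N m))"
  define q0 where "q0 = (\<lambda>m. sample_sd y0 (N m))"
  define P1 where "P1 = (\<lambda>m. q1 m / (q1 m + q0 m) * real T)"
  define P0 where "P0 = (\<lambda>m. q0 m / (q1 m + q0 m) * real T)"
  define x where "x = (\<lambda>m. (q1 m * s0) / (q0 m * s1))"
  define D where "D = (\<lambda>m. 25/9 * (u / real (N m)))"
  define Rf where "Rf = (\<lambda>p. case p of (t1, t0) \<Rightarrow> proxyV s1 s0 t1 t0 / neymanV s1 s0 (real T))"
  define C where "C = 4 * u * L / real T"
  define c0 where "c0 = (\<lambda>m. s0 * (1 - A m / real T) / (s1 * (A m / real T)))"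
  define c1 where "c1 = (\<lambda>m. s1 * (1 - A m / real T) / (s0 * (A m / real T)))"
  have Tp: "0 < real T" using T16 by simp
  have Lp: "0 < L" using L1 by simp
  have Am: "A m = 3 * L^m" if "m < M" for m using he that by (simp add: A_def)
  have Apos: "0 < A m" if "m < M" for m using Am[OF that] Lp by simp
  have LM1: "3 * L^(M-1) = real T / (5 * L)"
  proof -
    have "L^M = L * L^(M-1)" using M3 by (metis Suc_diff_1 less_le_trans numeral_3_eq_3 power_Suc zero_less_Suc)
    then show ?thesis using LM Lp by (simp add: field_simps)
  qed
  have alpha: "A m / real T \<le> 1/5" if "m \<le> M - 1" for m
  proof -
    have "m < M" using that M3 by linarith
    have "L^m \<le> L^(M-1)" using that L1 by (intro power_increasing) auto
    then have "A m \<le> real T / (5 * L)" using Am[OF \<open>m < M\<close>] LM1 by linarith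
    also have "\<dots> \<le> real T / 5" using L1 Tp by (intro divide_left_mono) auto
    finally show ?thesis using Tp by (simp add: divide_le_eq)
  qed
  have alpha_lt: "A m < real T" if "m \<le> M - 1" for m
    using alpha[OF that] Tp by (simp add: divide_le_eq)
  have NA: "A m \<le> real (N m)" if "m < M" for m
    unfolding N_def using n_obs_ge Apos[OF that] by simp
  have Npos: "0 < real (N m)" if "m < M" for m using NA[OF that] Apos[OF that] by linarith
  have Dle: "D m \<le> 25/9 * (u / (3 * L^m))" if "m < M" for m
  proof -
    have p: "0 < real (N m) * (3 * L^m)" using Npos[OF that] Lp by simp
    have "u / real (N m) \<le> u / (3 * L^m)"
      using NA[OF that] Am[OF that] u1 p by (intro divide_left_mono) auto
    then show ?thesis by (simp add: D_def)
  qed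
  have delta: "u / real (N m) \<le> 9/25" if "1 \<le> m" "m < M" for m
  proof -
    have "L \<le> L^m" using that L1 by (metis less_imp_le one_le_power power_increasing power_one_right)
    then have "3 * L \<le> real (N m)" using NA[OF that(2)] Am[OF that(2)] by linarith
    then have "u / real (N m) \<le> u / (3 * L)" using u1 Lp by (intro divide_left_mono) auto
    also have "\<dots> \<le> (27/25 * L) / (3 * L)" using uL Lp by (intro divide_right_mono) auto
    also have "\<dots> = 9/25" using Lp by simp
    finally show ?thesis .
  qed
  have stage: "0 < q1 m \<and> 0 < q0 m \<and> (1 - x m)^2 \<le> D m \<and> (1 - 1 / x m)^2 \<le> D m"
    if "1 \<le> m" "m \<le> M - 1" for m
  proof -
    have mM: "m < M" using that M3 by linarith
    define \<delta> where "\<delta> = sqrt (u / real (N m))"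
    have d0: "0 \<le> \<delta>" using u1 Npos[OF mM] by (simp add: \<delta>_def)
    have d1: "\<delta> \<le> 3/5"
    proof -
      have "\<delta> \<le> sqrt (9/25)" unfolding \<delta>_def using delta[OF that(1) mM] by simp
      also have "sqrt (9/25) = (3/5::real)" by (simp add: real_sqrt_divide)
      finally show ?thesis .
    qed
    have dd: "25/9 * \<delta>^2 = D m" using u1 Npos[OF mM] by (simp add: \<delta>_def D_def)
    have g: "\<bar>sample_var y1 (N m) - s1^2\<bar> < \<delta> * s1^2" "\<bar>sample_var y0 (N m) - s0^2\<bar> < \<delta> * s0^2"
      using good[OF that] by (simp_all add: \<delta>_def N_def A_def)
    note pb = pair_bound[OF g s1p s0p d0 d1]
    have ix: "1 / x m = (q0 m * s1) / (q1 m * s0)" by (simp add: x_def)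
    show ?thesis using pb unfolding dd ix
      by (simp add: q1_def q0_def x_def sample_sd_def)
  qed
  have unf: "alg M T y1 y0 m = (if M \<le> m + 1 then
        (if P0 m < A m then (real T - A m, A m) else if P1 m < A m then (A m, real T - A m)
         else (A m + (P1 m - A m), A m + (P0 m - A m)))
      else (if P0 m < A m then (real T - A m, A m) else if P0 m < A (m+1) then (real T - P0 m, P0 m)
        else if P1 m < A m then (A m, real T - A m) else if P1 m < A (m+1) then (P1 m, real T - P1 m)
        else alg M T y1 y0 (m + 1)))" for m
    by (subst alg.simps) (simp only: Let_def A_def N_def q1_def q0_def P1_def P0_def)
  have main: "Rf (alg M T y1 y0 m) \<le> 1 + C"
    if "1 \<le> m" "m \<le> M - 1" "m = 1 \<or> (2 \<le> m \<and> x (m-1) \<le> c0 m \<and> 1 / x (m-1) \<le> c1 m)" for m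
    using that
  proof (induction "M - m" arbitrary: m rule: less_induct)
    case less
    have m1: "1 \<le> m" and mM: "m \<le> M - 1" and ent: "m = 1 \<or> (2 \<le> m \<and> x (m-1) \<le> c0 m \<and> 1 / x (m-1) \<le> c1 m)"
      using less.prems by auto
    have mlt: "m < M" using mM M3 by linarith
    note st = stage[OF m1 mM]
    have q1p: "0 < q1 m" and q0p: "0 < q0 m" using st by auto
    have Ap: "0 < A m" using Apos[OF mlt] .
    have AT: "A m < real T" using alpha_lt[OF mM] .
    have al: "A m / real T \<le> 1/5" using alpha[OF mM] .
    have alp: "0 < A m / real T" using Ap Tp by simp
    have xpos: "0 < x m" using q1p q0p s1p s0p by (simp add: x_def)
    have cA: "P0 m < A m \<longleftrightarrow> c0 m < x m"
      using cond_conv[OF q1p q0p s1p s0p Ap AT] by (simp add: P0_def c0_def x_def)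
    have cB: "P1 m < A m \<longleftrightarrow> c1 m < 1 / x m"
      using cond_conv[OF q0p q1p s0p s1p Ap AT] by (simp add: P1_def c1_def x_def add.commute)
    have O1: "Rf (real T - A m, A m) \<le> 1 + (A m / real T) * (1 - c0 m)^2 / (1 - A m / real T)"
      using out_clip[OF s1p s0p Ap AT] by (simp add: Rf_def c0_def)
    have O2: "Rf (A m, real T - A m) \<le> 1 + (A m / real T) * (1 - c1 m)^2 / (1 - A m / real T)"
      using out_clip[OF s0p s1p Ap AT] by (simp add: Rf_def c1_def swapV)
    have Dm: "D m \<le> 25/9 * (u / (3 * L^(m-1)))"
    proof -
      have "L^(m-1) \<le> L^m" using L1 by (intro power_increasing) auto
      then have "u / (3 * L^m) \<le> u / (3 * L^(m-1))" using u1 Lp by (intro divide_left_mono) auto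
      then show ?thesis using Dle[OF mlt] by linarith
    qed
    have Kgen: "(A m / real T) * (1 - c)^2 \<le> 3 * u * L / real T"
      if cz: "c < z" and zD: "(1 - z)^2 \<le> D m"
        and en: "(m = 1 \<and> 0 < c) \<or> (2 \<le> m \<and> z' \<le> c \<and> (1 - z')^2 \<le> D (m-1))" for c z z'
    proof (cases "m = 1 \<and> 0 < c")
      case True
      then have m1': "m = 1" and cp: "0 < c" by auto
      have "(1 - c)^2 \<le> max ((1-0)^2) ((1 - z)^2)" using num_max[of 0 c z] cp cz by simp
      also have "\<dots> \<le> u"
      proof -
        have "D m \<le> 25/9 * (u / (3 * L))" using Dle[OF mlt] m1' by simp
        also have "\<dots> \<le> 25/9 * (u / 3)" using u1 L1 by (intro mult_left_mono divide_left_mono) auto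
        also have "\<dots> \<le> u" using u1 by simp
        finally show ?thesis using zD u1 by simp
      qed
      finally have K: "(1 - c)^2 \<le> u" .
      have "(A m / real T) * (1 - c)^2 \<le> (A m / real T) * u" using K alp by (intro mult_left_mono) auto
      also have "\<dots> = 3 * u * L / real T" using Am[OF mlt] m1' by simp
      finally show ?thesis .
    next
      case False
      then have m2: "2 \<le> m" and zc: "z' \<le> c" and zD': "(1 - z')^2 \<le> D (m-1)" using en by auto
      have mm: "m - 1 < M" using mlt by linarith
      have "(1 - c)^2 \<le> max ((1 - z')^2) ((1 - z)^2)" using num_max[of z' c z] zc cz by simp
      also have "\<dots> \<le> 25/9 * (u / (3 * L^(m-1)))"
        using zD zD' Dle[OF mm] Dm by simp
      finally have K: "(1 - c)^2 \<le> 25/9 * (u / (3 * L^(m-1)))" .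
      have "(A m / real T) * (1 - c)^2 \<le> (A m / real T) * (25/9 * (u / (3 * L^(m-1))))"
        using K alp by (intro mult_left_mono) auto
      also have "\<dots> = 25/9 * u * L / real T" using Am[OF mlt] num_pow[OF Lp Tp m1] by simp
      also have "\<dots> \<le> 3 * u * L / real T" using u1 Lp Tp by (intro divide_right_mono mult_right_mono) auto
      finally show ?thesis .
    qed
    have ent0: "(m = 1 \<and> 0 < c0 m) \<or> (2 \<le> m \<and> x (m-1) \<le> c0 m \<and> (1 - x (m-1))^2 \<le> D (m-1))"
    proof (cases "m = 1")
      case True
      have "0 < 1 - A m / real T" using al by linarith
      then have "0 < s0 * (1 - A m / real T) / (s1 * (A m / real T))"
        using s0p s1p alp Ap Tp by (intro divide_pos_pos mult_pos_pos) auto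
      then show ?thesis using True by (simp only: c0_def) blast
    next
      case False
      then have "2 \<le> m" "x (m-1) \<le> c0 m" using ent m1 by auto
      moreover have "(1 - x (m-1))^2 \<le> D (m-1)" using stage[of "m-1"] \<open>2 \<le> m\<close> mM by simp
      ultimately show ?thesis by simp
    qed
    have ent1: "(m = 1 \<and> 0 < c1 m) \<or> (2 \<le> m \<and> 1 / x (m-1) \<le> c1 m \<and> (1 - 1 / x (m-1))^2 \<le> D (m-1))"
    proof (cases "m = 1")
      case True
      have "0 < 1 - A m / real T" using al by linarith
      then have "0 < s1 * (1 - A m / real T) / (s0 * (A m / real T))"
        using s0p s1p alp Ap Tp by (intro divide_pos_pos mult_pos_pos) auto
      then show ?thesis using True by (simp only: c1_def) blast
    next
      case False
      then have "2 \<le> m" "1 / x (m-1) \<le> c1 m" using ent m1 by auto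
      moreover have "(1 - 1 / x (m-1))^2 \<le> D (m-1)" using stage[of "m-1"] \<open>2 \<le> m\<close> mM by simp
      ultimately show ?thesis by simp
    qed
    have clip0: "Rf (real T - A m, A m) \<le> 1 + C" if "P0 m < A m"
    proof -
      have "(A m / real T) * (1 - c0 m)^2 \<le> 3 * u * L / real T"
        using Kgen[of "c0 m" "x m" "x (m-1)"] that cA st ent0 by simp
      then have "(A m / real T) * (1 - c0 m)^2 / (1 - A m / real T) \<le> C"
        unfolding C_def using finish[OF alp al] by simp
      then show ?thesis using O1 by simp
    qed
    have clip1: "Rf (A m, real T - A m) \<le> 1 + C" if "P1 m < A m"
    proof -
      have "(A m / real T) * (1 - c1 m)^2 \<le> 3 * u * L / real T"
        using Kgen[of "c1 m" "1 / x m" "1 / x (m-1)"] that cB st ent1 by simp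
      then have "(A m / real T) * (1 - c1 m)^2 / (1 - A m / real T) \<le> C"
        unfolding C_def using finish[OF alp al] by simp
      then show ?thesis using O2 by simp
    qed
    have O3: "Rf (real T - P0 m, P0 m) \<le> 1 + (q0 m / (q1 m + q0 m)) * (1 - x m)^2 / (1 - q0 m / (q1 m + q0 m))"
      using out_est(1)[OF q1p q0p s1p s0p Tp] by (simp add: Rf_def P0_def x_def)
    have O5: "Rf (real T - P0 m, P0 m) \<le> 1 + (1 - x m)^2 / (4 * x m)"
      using out_est(2)[OF q1p q0p s1p s0p Tp] by (simp add: Rf_def P0_def x_def)
    have O4: "Rf (P1 m, real T - P1 m) \<le> 1 + (q1 m / (q0 m + q1 m)) * (1 - 1 / x m)^2 / (1 - q1 m / (q0 m + q1 m))"
    proof -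
      have "Rf (P1 m, real T - P1 m) = proxyV s0 s1 (real T - q1 m / (q0 m + q1 m) * real T) (q1 m / (q0 m + q1 m) * real T) / neymanV s0 s1 (real T)"
        by (simp add: Rf_def P1_def swapV add.commute)
      also have "\<dots> \<le> 1 + (q1 m / (q0 m + q1 m)) * (1 - (q0 m * s1) / (q1 m * s0))^2 / (1 - q1 m / (q0 m + q1 m))"
        by (rule out_est(1)[OF q0p q1p s0p s1p Tp])
      also have "(q0 m * s1) / (q1 m * s0) = 1 / x m" by (simp add: x_def)
      finally show ?thesis .
    qed
    have est: "r * (1 - z)^2 / (1 - r) \<le> C"
      if rp: "0 < r" and rl: "r < A (m+1) / real T" and zD: "(1 - z)^2 \<le> D m" and mm: "m + 1 \<le> M - 1" for r z
    proof -
      have m1M: "m + 1 < M" using mm M3 by linarith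
      have rle: "r \<le> 1/5" using rl alpha[OF mm] by linarith
      have Ap1: "0 < A (m+1) / real T" using Apos[OF m1M] Tp by simp
      have "r * (1 - z)^2 \<le> (A (m+1) / real T) * (1 - z)^2" using rl by (intro mult_right_mono) auto
      also have "\<dots> \<le> (A (m+1) / real T) * (25/9 * (u / (3 * L^m)))"
        using zD Dle[OF mlt] Ap1 by (intro mult_left_mono) auto
      also have "\<dots> = 25/9 * u * L / real T" using Am[OF m1M] num_pow[OF Lp Tp, of "m+1" u] by simp
      also have "\<dots> \<le> 3 * u * L / real T" using u1 Lp Tp by (intro divide_right_mono mult_right_mono) auto
      finally have "r * (1 - z)^2 \<le> 3 * u * L / real T" .
      then show ?thesis unfolding C_def using finish[OF rp rle] by simp
    qed
    have r0p: "0 < q0 m / (q1 m + q0 m)" and r1p: "0 < q1 m / (q0 m + q1 m)" using q1p q0p by simp_all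
    have r0l: "q0 m / (q1 m + q0 m) < A (m+1) / real T" if "P0 m < A (m+1)"
      using that Tp by (simp add: P0_def pos_less_divide_eq)
    have r1l: "q1 m / (q0 m + q1 m) < A (m+1) / real T" if "P1 m < A (m+1)"
      using that Tp by (simp add: P1_def pos_less_divide_eq add.commute)
    have P10: "P1 m = real T - P0 m"
    proof -
      have "q1 m + q0 m \<noteq> 0" using q1p q0p by simp
      then show ?thesis by (simp add: P1_def P0_def field_simps)
    qed
    show ?case
    proof (cases "M \<le> m + 1")
      case fin: True
      have mfin: "m = M - 1" using fin mM by linarith
      show ?thesis
      proof (cases "P0 m < A m")
        case True
        then show ?thesis using clip0 unf[of m] fin by simp
      next
        case c0f: False
        show ?thesis
        proof (cases "P1 m < A m")
          case True
          then show ?thesis using clip1 unf[of m] fin c0f by simp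
        next
          case False
          have "alg M T y1 y0 m = (real T - P0 m, P0 m)" using unf[of m] fin c0f False P10 by simp
          moreover have "(1 - x m)^2 / (4 * x m) \<le> C"
          proof -
            have "(1 - x m)^2 / (4 * x m) \<le> max ((1 - x m)^2) ((1 - 1 / x m)^2) / 4" by (rule num_ney[OF xpos])
            also have "\<dots> \<le> D m / 4" using st by (intro divide_right_mono) auto
            also have "\<dots> \<le> 25/36 * (u / (3 * L^m))" using Dle[OF mlt] by simp
            also have "\<dots> = 125/36 * u * L / real T" using LM1 mfin Lp Tp by (simp add: field_simps)
            also have "\<dots> \<le> C" unfolding C_def using u1 Lp Tp by (intro divide_right_mono mult_right_mono) auto
            finally show ?thesis .
          qed
          ultimately show ?thesis using O5 by simp
        qed
      qed
    next
      case nfin: False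
      have mm: "m + 1 \<le> M - 1" using nfin by linarith
      have m1M: "m + 1 < M" using nfin by linarith
      have Ap1: "0 < A (m+1)" using Apos[OF m1M] .
      have AT1: "A (m+1) < real T" using alpha_lt[OF mm] .
      show ?thesis
      proof (cases "P0 m < A m")
        case True
        then show ?thesis using clip0 unf[of m] nfin by simp
      next
        case f1: False
        show ?thesis
        proof (cases "P0 m < A (m+1)")
          case True
          have "alg M T y1 y0 m = (real T - P0 m, P0 m)" using unf[of m] nfin f1 True by simp
          then show ?thesis using O3 est[OF r0p r0l[OF True] _ mm, of "x m"] st by simp
        next
          case f2: False
          show ?thesis
          proof (cases "P1 m < A m")
            case True
            then show ?thesis using clip1 unf[of m] nfin f1 f2 by simp
          next
            case f3: False
            show ?thesis
            proof (cases "P1 m < A (m+1)")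
              case True
              have "alg M T y1 y0 m = (P1 m, real T - P1 m)" using unf[of m] nfin f1 f2 f3 True by simp
              then show ?thesis using O4 est[OF r1p r1l[OF True] _ mm, of "1 / x m"] st by simp
            next
              case f4: False
              have "alg M T y1 y0 m = alg M T y1 y0 (m + 1)" using unf[of m] nfin f1 f2 f3 f4 by simp
              moreover have "Rf (alg M T y1 y0 (m + 1)) \<le> 1 + C"
              proof (rule less.hyps)
                show "M - (m + 1) < M - m" using m1M by linarith
                show "1 \<le> m + 1" "m + 1 \<le> M - 1" using mm by auto
                have e0: "x m \<le> c0 (m+1)"
                  using f2 cond_conv[OF q1p q0p s1p s0p Ap1 AT1] by (simp add: P0_def c0_def x_def)
                have e1: "1 / x m \<le> c1 (m+1)"
                  using f4 cond_conv[OF q0p q1p s0p s1p Ap1 AT1] by (simp add: P1_def c1_def x_def add.commute)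
                show "m + 1 = 1 \<or> (2 \<le> m + 1 \<and> x (m + 1 - 1) \<le> c0 (m + 1) \<and> 1 / x (m + 1 - 1) \<le> c1 (m + 1))"
                  using e0 e1 m1 by simp
              qed
              ultimately show ?thesis by simp
            qed
          qed
        qed
      qed
    qed
  qed
  have "Rf (alg M T y1 y0 1) \<le> 1 + C" by (rule main) (use M3 in auto)
  then show ?thesis by (simp add: Rf_def C_def)
qed


lemma sample_var_meas[measurable]:
  assumes [measurable]: "\<And>i. X i \<in> borel_measurable M"
  shows "(\<lambda>\<omega>. sample_var (\<lambda>i. X i \<omega>) n) \<in> borel_measurable M"
  unfolding sample_var_def Let_def by measurable

context prob_space begin

lemma cheb:
  fixes X :: "nat \<Rightarrow> 'a \<Rightarrow> real"
  assumes ind: "indep_vars (\<lambda>_. borel) X UNIV"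
    and idd: "\<And>i. distr M borel (X i) = distr M borel (X 0)"
    and i4: "integrable M (\<lambda>x. X 0 x ^ 4)" and N: "3 \<le> N"
    and pos: "0 < pop_var M (X 0)" and u: "0 < u"
  shows "{\<omega> \<in> space M. sqrt (u / N) * pop_var M (X 0) \<le> \<bar>sample_var (\<lambda>i. X i \<omega>) N - pop_var M (X 0)\<bar>} \<in> events"
    "prob {\<omega> \<in> space M. sqrt (u / N) * pop_var M (X 0) \<le> \<bar>sample_var (\<lambda>i. X i \<omega>) N - pop_var M (X 0)\<bar>} \<le> kurt M (X 0) / u"
proof -
  have Xm[measurable]: "\<And>i. X i \<in> borel_measurable M"
    using ind by (auto simp: indep_vars_def)
  define \<sigma>2 where "\<sigma>2 = pop_var M (X 0)"
  define \<mu>4 where "\<mu>4 = expectation (\<lambda>x. (X 0 x - pop_mean M (X 0))^4)"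
  define f where "f = (\<lambda>\<omega>. sample_var (\<lambda>i. X i \<omega>) N - \<sigma>2)"
  define a where "a = sqrt (u / N) * \<sigma>2"
  have Np: "0 < real N" using N by simp
  have ap: "0 < a" using u Np pos by (simp add: a_def \<sigma>2_def)
  have fm[measurable]: "f \<in> borel_measurable M" unfolding f_def by measurable
  note mo = moments[OF ind idd i4 N]
  have fi: "integrable M (\<lambda>x. f x ^ 2)" using mo(1) by (simp add: f_def \<sigma>2_def)
  show "{\<omega> \<in> space M. sqrt (u / N) * pop_var M (X 0) \<le> \<bar>sample_var (\<lambda>i. X i \<omega>) N - pop_var M (X 0)\<bar>} \<in> events"
    by measurable
  have "prob {\<omega> \<in> space M. sqrt (u / N) * pop_var M (X 0) \<le> \<bar>sample_var (\<lambda>i. X i \<omega>) N - pop_var M (X 0)\<bar>}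
      = prob {x \<in> space M. \<bar>f x\<bar> \<ge> a}" by (simp add: f_def a_def \<sigma>2_def)
  also have "\<dots> \<le> expectation (\<lambda>x. f x ^ 2) / a^2"
    by (rule second_moment_method[OF fm fi ap])
  also have "\<dots> \<le> (\<mu>4 / N) / a^2"
    using mo(2) by (intro divide_right_mono) (auto simp: f_def \<sigma>2_def \<mu>4_def)
  also have "\<dots> = \<mu>4 / (u * \<sigma>2^2)"
  proof -
    have "a^2 = u / N * \<sigma>2^2" using u Np by (simp add: a_def power_mult_distrib)
    then show ?thesis using u Np pos by (simp add: \<sigma>2_def field_simps)
  qed
  also have "\<dots> = kurt M (X 0) / u"
  proof -
    have e: "sqrt \<sigma>2 ^ 4 = (sqrt \<sigma>2 ^ 2) ^ 2" by (simp flip: power_mult)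
    have "pop_sd M (X 0) ^ 4 = \<sigma>2^2"
      using pos unfolding pop_sd_def \<sigma>2_def[symmetric] e by simp
    then show ?thesis by (simp add: kurt_def \<mu>4_def)
  qed
  finally show "prob {\<omega> \<in> space M. sqrt (u / N) * pop_var M (X 0) \<le> \<bar>sample_var (\<lambda>i. X i \<omega>) N - pop_var M (X 0)\<bar>} \<le> kurt M (X 0) / u" .
qed

end

theorem theorem3:
  fixes P :: "'a measure"
    and Y1 Y0 :: "nat \<Rightarrow> 'a \<Rightarrow> real"
    and M T :: nat
    and \<epsilon> :: real
  assumes "prob_space P"
    and "M \<ge> 3" and "T \<ge> 16"
    and "0 < \<epsilon>" and "\<epsilon> \<le> min (1 / real M) (1 / 100)"
    and iid1: "prob_space.indep_vars P (\<lambda>_. borel) Y1 UNIV" "\<And>i. distr P borel (Y1 i) = distr P borel (Y1 0)"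
    and iid0: "prob_space.indep_vars P (\<lambda>_. borel) Y0 UNIV" "\<And>i. distr P borel (Y0 i) = distr P borel (Y0 0)"
    and fourth1: "integrable P (\<lambda>x. (Y1 0 x) ^ 4)"
    and fourth0: "integrable P (\<lambda>x. (Y0 0 x) ^ 4)"
    and pos1: "pop_var P (Y1 0) > 0"
    and pos0: "pop_var P (Y0 0) > 0"
  shows "(1 < stage_end M T 1
          \<and> (\<forall>m. 1 \<le> m \<and> m + 1 \<le> M - 1 \<longrightarrow> stage_end M T m < stage_end M T (m + 1))
          \<and> stage_end M T (M - 1) < real T)
       \<and> (\<exists>E \<in> sets P.
            measure P E \<ge> 1 - real (M - 1) * (kurt P (Y1 0) + kurt P (Y0 0)) * real T powr (- \<epsilon>)
          \<and> (\<forall>\<omega> \<in> E.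
               (let (t1, t0) = adaptive_alloc M T (\<lambda>i. Y1 i \<omega>) (\<lambda>i. Y0 i \<omega>);
                    s1 = pop_sd P (Y1 0); s0 = pop_sd P (Y0 0)
                in proxyV s1 s0 t1 t0 / neymanV s1 s0 (real T)
                   \<le> 1 + 4 * 15 powr (- (1 / real M)) * real T powr (- ((real M - 1) / real M) + \<epsilon>))))"
proof -
  interpret P: prob_space P by fact
  note M3 = assms(2) and T16 = assms(3) and e0 = assms(4) and e1 = assms(5)
  define L where "L = (real T / 15) powr (1 / real M)"
  define u where "u = real T powr \<epsilon>"
  note SL = stage_L[OF M3 T16, folded L_def]
  note UB = u_bounds[OF M3 T16 e0 e1, folded L_def u_def]
  have L1: "1 < L" using SL(1) .
  have Lp: "0 < L" using L1 by simp
  have Tp: "0 < real T" using T16 by simp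
  have LM1: "L^(M-1) = real T / (15 * L)"
  proof -
    have "L^M = L * L^(M-1)" using M3 by (metis Suc_diff_1 less_le_trans numeral_3_eq_3 power_Suc zero_less_Suc)
    then show ?thesis using SL(2) Lp by (simp add: field_simps)
  qed
  have feas: "1 < stage_end M T 1
          \<and> (\<forall>m. 1 \<le> m \<and> m + 1 \<le> M - 1 \<longrightarrow> stage_end M T m < stage_end M T (m + 1))
          \<and> stage_end M T (M - 1) < real T"
  proof (intro conjI allI impI)
    show "1 < stage_end M T 1" using SL(4)[of 1] M3 L1 by simp
    fix m assume "1 \<le> m \<and> m + 1 \<le> M - 1"
    then have "m < M" "m + 1 < M" by auto
    moreover have "L^m < L^(m+1)" using L1 by (intro power_strict_increasing) auto
    ultimately show "stage_end M T m < stage_end M T (m + 1)" using SL(4) by simp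
  next
    have "stage_end M T (M - 1) = 6 * (real T / (15 * L))" using SL(4)[of "M-1"] M3 LM1 by simp
    also have "\<dots> < real T" using L1 Tp by (simp add: field_simps)
    finally show "stage_end M T (M - 1) < real T" .
  qed
  define \<sigma>1 where "\<sigma>1 = pop_sd P (Y1 0)"
  define \<sigma>0 where "\<sigma>0 = pop_sd P (Y0 0)"
  have s1p: "0 < \<sigma>1" using pos1 by (simp add: \<sigma>1_def pop_sd_def)
  have s0p: "0 < \<sigma>0" using pos0 by (simp add: \<sigma>0_def pop_sd_def)
  have s1sq: "\<sigma>1^2 = pop_var P (Y1 0)" using pos1 by (simp add: \<sigma>1_def pop_sd_def)
  have s0sq: "\<sigma>0^2 = pop_var P (Y0 0)" using pos0 by (simp add: \<sigma>0_def pop_sd_def)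
  have up: "0 < u" using UB(1) by simp
  define Nn where "Nn = (\<lambda>m. n_obs (half_end M T m))"
  have N3: "3 \<le> Nn m" if "1 \<le> m" "m \<le> M - 1" for m
  proof -
    have mM: "m < M" using that M3 by linarith
    have "L \<le> L^m" using that L1 by (metis less_imp_le one_le_power power_increasing power_one_right)
    then have "3 < half_end M T m" using SL(3)[OF mM] L1 by simp
    then have "3 < real (Nn m)" using n_obs_ge[of "half_end M T m"] by (simp add: Nn_def)
    then show ?thesis by simp
  qed
  define B1 where "B1 = (\<lambda>m. {\<omega> \<in> space P. sqrt (u / Nn m) * pop_var P (Y1 0) \<le> \<bar>sample_var (\<lambda>i. Y1 i \<omega>) (Nn m) - pop_var P (Y1 0)\<bar>})"
  define B0 where "B0 = (\<lambda>m. {\<omega> \<in> space P. sqrt (u / Nn m) * pop_var P (Y0 0) \<le> \<bar>sample_var (\<lambda>i. Y0 i \<omega>) (Nn m) - pop_var P (Y0 0)\<bar>})"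
  define I where "I = {1..M-1}"
  have B1s: "B1 m \<in> sets P" and B1p: "measure P (B1 m) \<le> kurt P (Y1 0) / u" if "m \<in> I" for m
  proof -
    have m: "1 \<le> m" "m \<le> M - 1" using that by (auto simp: I_def)
    note c = P.cheb[OF iid1 fourth1 N3[OF m] pos1 up]
    show "B1 m \<in> sets P" unfolding B1_def by (rule c(1))
    show "measure P (B1 m) \<le> kurt P (Y1 0) / u" unfolding B1_def by (rule c(2))
  qed
  have B0s: "B0 m \<in> sets P" and B0p: "measure P (B0 m) \<le> kurt P (Y0 0) / u" if "m \<in> I" for m
  proof -
    have m: "1 \<le> m" "m \<le> M - 1" using that by (auto simp: I_def)
    note c = P.cheb[OF iid0 fourth0 N3[OF m] pos0 up]
    show "B0 m \<in> sets P" unfolding B0_def by (rule c(1))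
    show "measure P (B0 m) \<le> kurt P (Y0 0) / u" unfolding B0_def by (rule c(2))
  qed
  define E where "E = space P - (\<Union>m\<in>I. B1 m \<union> B0 m)"
  have Us: "(\<Union>m\<in>I. B1 m \<union> B0 m) \<in> sets P" using B1s B0s by (auto simp: I_def)
  have Es: "E \<in> sets P" unfolding E_def using Us by auto
  have "measure P (\<Union>m\<in>I. B1 m \<union> B0 m) \<le> (\<Sum>m\<in>I. measure P (B1 m \<union> B0 m))"
    by (rule P.finite_measure_subadditive_finite) (use B1s B0s in \<open>auto simp: I_def\<close>)
  also have "\<dots> \<le> (\<Sum>m\<in>I. kurt P (Y1 0) / u + kurt P (Y0 0) / u)"
  proof (rule sum_mono)
    fix m assume m: "m \<in> I"
    have "measure P (B1 m \<union> B0 m) \<le> measure P (B1 m) + measure P (B0 m)"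
      by (rule measure_Un_le[OF B1s[OF m] B0s[OF m]])
    then show "measure P (B1 m \<union> B0 m) \<le> kurt P (Y1 0) / u + kurt P (Y0 0) / u"
      using B1p[OF m] B0p[OF m] by linarith
  qed
  also have "\<dots> = real (M - 1) * (kurt P (Y1 0) + kurt P (Y0 0)) * real T powr (- \<epsilon>)"
  proof -
    have c: "card I = M - 1" by (simp add: I_def)
    have p: "real T powr (- \<epsilon>) = 1 / u" by (simp add: u_def powr_minus divide_inverse)
    show ?thesis unfolding p using c by (simp add: add_divide_distrib[symmetric])
  qed
  finally have Ub: "measure P (\<Union>m\<in>I. B1 m \<union> B0 m) \<le> real (M - 1) * (kurt P (Y1 0) + kurt P (Y0 0)) * real T powr (- \<epsilon>)" .
  have mE: "measure P E \<ge> 1 - real (M - 1) * (kurt P (Y1 0) + kurt P (Y0 0)) * real T powr (- \<epsilon>)"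
    unfolding E_def using P.prob_compl[OF Us] Ub by simp
  have Ceq: "4 * u * L / real T = 4 * 15 powr (- (1 / real M)) * real T powr (- ((real M - 1) / real M) + \<epsilon>)"
  proof -
    have Mp: "0 < real M" using M3 by simp
    have a: "real T powr (- ((real M - 1) / real M) + \<epsilon>) = real T powr (1 / real M) / real T * u"
    proof -
      have "- ((real M - 1) / real M) + \<epsilon> = 1 / real M - 1 + \<epsilon>" using Mp by (simp add: field_simps)
      then show ?thesis using Tp by (simp add: u_def powr_add powr_diff)
    qed
    have b: "L = real T powr (1 / real M) / 15 powr (1 / real M)" unfolding L_def by (simp add: powr_divide)
    have c: "15 powr (- (1 / real M)) = 1 / 15 powr (1 / real M)" by (simp add: powr_minus divide_inverse)
    show ?thesis unfolding a b c by simp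
  qed
  have det: "(case alg M T (\<lambda>i. Y1 i \<omega>) (\<lambda>i. Y0 i \<omega>) 1 of (t1, t0) \<Rightarrow> proxyV \<sigma>1 \<sigma>0 t1 t0 / neymanV \<sigma>1 \<sigma>0 (real T))
      \<le> 1 + 4 * u * L / real T" if w: "\<omega> \<in> E" for \<omega>
  proof (rule det_main[OF M3 T16 L1 SL(2) SL(3) UB(1) UB(2) s1p s0p])
    fix m assume m: "1 \<le> m" "m \<le> M - 1"
    then have mI: "m \<in> I" by (simp add: I_def)
    have "\<omega> \<in> space P" "\<omega> \<notin> B1 m" "\<omega> \<notin> B0 m" using w mI by (auto simp: E_def)
    then show "\<bar>sample_var (\<lambda>i. Y1 i \<omega>) (n_obs (half_end M T m)) - \<sigma>1^2\<bar> < sqrt (u / n_obs (half_end M T m)) * \<sigma>1^2 \<and>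
        \<bar>sample_var (\<lambda>i. Y0 i \<omega>) (n_obs (half_end M T m)) - \<sigma>0^2\<bar> < sqrt (u / n_obs (half_end M T m)) * \<sigma>0^2"
      unfolding s1sq s0sq by (auto simp: B1_def B0_def Nn_def not_le)
  qed
  show ?thesis
  proof (rule conjI[OF feas], rule bexI[OF _ Es], rule conjI[OF mE], rule ballI)
    fix \<omega> assume "\<omega> \<in> E"
    from det[OF this] show "let (t1, t0) = adaptive_alloc M T (\<lambda>i. Y1 i \<omega>) (\<lambda>i. Y0 i \<omega>);
                    s1 = pop_sd P (Y1 0); s0 = pop_sd P (Y0 0)
                in proxyV s1 s0 t1 t0 / neymanV s1 s0 (real T)
                   \<le> 1 + 4 * 15 powr (- (1 / real M)) * real T powr (- ((real M - 1) / real M) + \<epsilon>)"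
      unfolding Ceq adaptive_alloc_def \<sigma>1_def \<sigma>0_def by (simp only: Let_def) (simp split: prod.splits)
  qed
qed


end
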